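(* Let $\mathcal{H}$ be a complex separable Hilbert space and let $A$ be a bounded, self-adjoint, injective, non-invertible operator on $\mathcal{H}$ with cyclic multiplicity $N \in \mathbb{N}\cup\{+\infty\}$. Then for any $M \in \mathbb{N}\cup\{+\infty\}$ with $M \ge N$, there is an orthogonal decomposition $\mathcal{H} = \bigoplus_{j=1}^M \mathcal{K}_j$ into closed subspaces invariant under $A$ such that $A = \bigoplus_{j=1}^M A_j$ with $A_j = A|_{\mathcal{K}_j}$, where each $A_j$ is self-adjoint, injective and not invertible.
   Context: A self-adjoint $A$ has cyclic multiplicity $N$ if $N$ is the minimal number such that there is an orthonormal set $\{h_k\}_{k=1}^N$ with $\mathcal{H} = \bigoplus_{k=1}^N \mathcal{H}_k$ (orthogonal sum), where $\mathcal{H}_k$ is the closed linear span of $\{A^j h_k : j\ge 0\}$. *)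

theory Defs
  imports "HOL-Analysis.Analysis" "HOL-Library.Extended_Nat"
begin

text \<open>The library has no complex inner product spaces, so we introduce the class of
complex Hilbert spaces: a real Banach space with a compatible complex scalar
multiplication and a complex inner product (conjugate-linear in the first argument)
inducing the norm.\<close>

class complex_hilbert = banach +
  fixes scaleC :: "complex \<Rightarrow> 'a \<Rightarrow> 'a"
    and cinner :: "'a \<Rightarrow> 'a \<Rightarrow> complex"
  assumes scaleC_add_right: "scaleC c (x + y) = scaleC c x + scaleC c y"
    and scaleC_add_left: "scaleC (c + d) x = scaleC c x + scaleC d x"
    and scaleC_scaleC: "scaleC c (scaleC d x) = scaleC (c * d) x"
    and scaleC_one: "scaleC 1 x = x"
    and scaleR_scaleC: "scaleR r x = scaleC (complex_of_real r) x"
    and cinner_add_left: "cinner (x + y) z = cinner x z + cinner y z"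
    and cinner_scaleC_left: "cinner (scaleC c x) y = cnj c * cinner x y"
    and cinner_commute: "cinner y x = cnj (cinner x y)"
    and cinner_self_real: "Im (cinner x x) = 0"
    and cinner_self_nonneg: "0 \<le> Re (cinner x x)"
    and norm_eq_sqrt_cinner: "norm x = sqrt (Re (cinner x x))"

definition separable_space :: "'a::topological_space itself \<Rightarrow> bool" where
  "separable_space _ \<longleftrightarrow> (\<exists>D::'a set. countable D \<and> closure D = UNIV)"

definition cspan :: "'a::complex_hilbert set \<Rightarrow> 'a set" where
  "cspan S = {\<Sum>v\<in>T. scaleC (c v) v | T c. finite T \<and> T \<subseteq> S}"

definition closed_csubspace :: "'a::complex_hilbert set \<Rightarrow> bool" where
  "closed_csubspace K \<longleftrightarrow> closed K \<and> 0 \<in> K \<and> (\<forall>x\<in>K. \<forall>y\<in>K. x + y \<in> K)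
     \<and> (\<forall>c. \<forall>x\<in>K. scaleC c x \<in> K)"

definition bounded_clinear_on :: "'a::complex_hilbert set \<Rightarrow> ('a \<Rightarrow> 'a) \<Rightarrow> bool" where
  "bounded_clinear_on K T \<longleftrightarrow>
     (\<forall>x\<in>K. \<forall>y\<in>K. T (x + y) = T x + T y) \<and> (\<forall>c. \<forall>x\<in>K. T (scaleC c x) = scaleC c (T x))
     \<and> (\<exists>C. \<forall>x\<in>K. norm (T x) \<le> C * norm x)"

definition self_adjoint_on :: "'a::complex_hilbert set \<Rightarrow> ('a \<Rightarrow> 'a) \<Rightarrow> bool" where
  "self_adjoint_on K T \<longleftrightarrow> (\<forall>x\<in>K. \<forall>y\<in>K. cinner (T x) y = cinner x (T y))"

definition invertible_on :: "'a::complex_hilbert set \<Rightarrow> ('a \<Rightarrow> 'a) \<Rightarrow> bool" where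
  "invertible_on K T \<longleftrightarrow> (\<exists>B. bounded_clinear_on K B \<and> (\<forall>y\<in>K. B y \<in> K \<and> T (B y) = y)
     \<and> (\<forall>x\<in>K. B (T x) = x))"

definition cyclic_subspace :: "('a::complex_hilbert \<Rightarrow> 'a) \<Rightarrow> 'a \<Rightarrow> 'a set" where
  "cyclic_subspace T h = closure (cspan {(T ^^ j) h | j. True})"

definition orthogonal_sum :: "(nat \<Rightarrow> 'a::complex_hilbert set) \<Rightarrow> nat set \<Rightarrow> bool" where
  "orthogonal_sum K I \<longleftrightarrow>
     (\<forall>k\<in>I. \<forall>l\<in>I. k \<noteq> l \<longrightarrow> (\<forall>x\<in>K k. \<forall>y\<in>K l. cinner x y = 0))
     \<and> closure (cspan (\<Union>k\<in>I. K k)) = UNIV"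

text \<open>Index set {1..N} for N \<in> \<nat> \<union> {\<infinity>}, realised as {k. k < N} (0-based).\<close>
definition idx :: "enat \<Rightarrow> nat set" where
  "idx N = {k. enat k < N}"

definition cyclic_decomposition :: "('a::complex_hilbert \<Rightarrow> 'a) \<Rightarrow> enat \<Rightarrow> (nat \<Rightarrow> 'a) \<Rightarrow> bool" where
  "cyclic_decomposition T N h \<longleftrightarrow>
     (\<forall>k\<in>idx N. norm (h k) = 1) \<and> (\<forall>k\<in>idx N. \<forall>l\<in>idx N. k \<noteq> l \<longrightarrow> cinner (h k) (h l) = 0)
     \<and> orthogonal_sum (\<lambda>k. cyclic_subspace T (h k)) (idx N)"

definition cyclic_multiplicity :: "('a::complex_hilbert \<Rightarrow> 'a) \<Rightarrow> enat \<Rightarrow> bool" where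
  "cyclic_multiplicity T N \<longleftrightarrow> (\<exists>h. cyclic_decomposition T N h)
     \<and> (\<forall>M. (\<exists>h. cyclic_decomposition T M h) \<longrightarrow> N \<le> M)"

end

theory Submission
  imports Defs
begin

lemma scaleC_zero_right[simp]: "scaleC c (0::'a::complex_hilbert) = 0"
  using scaleC_add_right[of c "0::'a" 0] by simp

lemma scaleC_zero_left[simp]: "scaleC 0 (x::'a::complex_hilbert) = 0"
  using scaleC_add_left[of 0 0 x] by simp

lemma scaleC_minus_right: "scaleC c (- (x::'a::complex_hilbert)) = - scaleC c x"
  using scaleC_add_right[of c x "-x"] by (simp add: add.inverse_unique)

lemma scaleC_diff_right: "scaleC c ((x::'a::complex_hilbert) - y) = scaleC c x - scaleC c y"
  by (metis diff_conv_add_uminus scaleC_add_right scaleC_minus_right)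

lemma scaleC_minus_left: "scaleC (- c) (x::'a::complex_hilbert) = - scaleC c x"
  using scaleC_add_left[of c "-c" x] by (simp add: add.inverse_unique)

lemma scaleC_diff_left: "scaleC (c - d) (x::'a::complex_hilbert) = scaleC c x - scaleC d x"
  using scaleC_add_left[of c "-d" x] by (simp add: scaleC_minus_left)

lemma scaleC_of_real: "scaleC (complex_of_real r) (x::'a::complex_hilbert) = r *\<^sub>R x"
  by (simp add: scaleR_scaleC)

lemma scaleC_sum_right: "scaleC c (sum f A) = (\<Sum>i\<in>A. scaleC c (f i :: 'a::complex_hilbert))"
  by (induction A rule: infinite_finite_induct) (auto simp: scaleC_add_right)

lemma cinner_add_right: "cinner (x::'a::complex_hilbert) (y + z) = cinner x y + cinner x z"
  by (metis cinner_commute cinner_add_left complex_cnj_add)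

lemma cinner_scaleC_right: "cinner (x::'a::complex_hilbert) (scaleC c y) = c * cinner x y"
  by (metis cinner_commute cinner_scaleC_left complex_cnj_cnj complex_cnj_mult)

lemma cinner_zero_left[simp]: "cinner 0 (x::'a::complex_hilbert) = 0"
  using cinner_add_left[of 0 0 x] by simp

lemma cinner_zero_right[simp]: "cinner (x::'a::complex_hilbert) 0 = 0"
  using cinner_add_right[of x 0 0] by simp

lemma cinner_minus_left: "cinner (- x) (y::'a::complex_hilbert) = - cinner x y"
  using cinner_add_left[of x "-x" y] by (simp add: add.inverse_unique)

lemma cinner_minus_right: "cinner x (- (y::'a::complex_hilbert)) = - cinner x y"
  using cinner_add_right[of x y "-y"] by (simp add: add.inverse_unique)

lemma cinner_diff_left: "cinner (x - y) (z::'a::complex_hilbert) = cinner x z - cinner y z"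
  using cinner_add_left[of x "-y" z] by (simp add: cinner_minus_left)

lemma cinner_diff_right: "cinner x (y - (z::'a::complex_hilbert)) = cinner x y - cinner x z"
  using cinner_add_right[of x y "-z"] by (simp add: cinner_minus_right)

lemma cinner_scaleR_left: "cinner (r *\<^sub>R x) (y::'a::complex_hilbert) = of_real r * cinner x y"
  by (simp add: scaleR_scaleC cinner_scaleC_left)

lemma cinner_scaleR_right: "cinner x (r *\<^sub>R (y::'a::complex_hilbert)) = of_real r * cinner x y"
  by (simp add: scaleR_scaleC cinner_scaleC_right)

lemma cinner_sum_left: "cinner (sum f A) (y::'a::complex_hilbert) = (\<Sum>i\<in>A. cinner (f i) y)"
  by (induction A rule: infinite_finite_induct) (auto simp: cinner_add_left)

lemma cinner_sum_right: "cinner y (sum f A) = (\<Sum>i\<in>A. cinner (y::'a::complex_hilbert) (f i))"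
  by (induction A rule: infinite_finite_induct) (auto simp: cinner_add_right)

lemma cinner_self: "cinner x (x::'a::complex_hilbert) = complex_of_real ((norm x)^2)"
proof -
  have "(norm x)^2 = Re (cinner x x)" using norm_eq_sqrt_cinner[of x] cinner_self_nonneg[of x] by simp
  then show ?thesis using cinner_self_real[of x] by (simp add: complex_eq_iff)
qed

lemma Re_cinner_self: "Re (cinner x (x::'a::complex_hilbert)) = (norm x)^2"
  by (simp add: cinner_self)

lemma cinner_self_eq_0[simp]: "cinner x x = 0 \<longleftrightarrow> (x::'a::complex_hilbert) = 0"
  by (simp add: cinner_self)

lemma Re_cinner_commute: "Re (cinner x (y::'a::complex_hilbert)) = Re (cinner y x)"
  by (metis cinner_commute complex_cnj_cnj cnj.simps(1))

lemma norm_add_sq: "(norm (x + y))^2 = (norm x)^2 + (norm (y::'a::complex_hilbert))^2 + 2 * Re (cinner x y)"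
proof -
  have "(norm (x+y))^2 = Re (cinner (x+y) (x+y))" by (simp add: Re_cinner_self)
  also have "\<dots> = Re (cinner x x) + Re (cinner y y) + Re (cinner x y) + Re (cinner y x)"
    by (simp add: cinner_add_left cinner_add_right)
  finally show ?thesis by (simp add: Re_cinner_self Re_cinner_commute[of y x])
qed

lemma norm_diff_sq: "(norm (x - y))^2 = (norm x)^2 + (norm (y::'a::complex_hilbert))^2 - 2 * Re (cinner x y)"
  using norm_add_sq[of x "-y"] by (simp add: cinner_minus_right)

lemma Re_cinner_le: "Re (cinner x (y::'a::complex_hilbert)) \<le> norm x * norm y"
proof -
  have "(norm (x+y))^2 \<le> (norm x + norm y)^2"
    by (simp add: power_mono norm_triangle_ineq)
  then show ?thesis by (simp add: norm_add_sq power2_sum)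
qed

lemma norm_scaleC: "norm (scaleC c (x::'a::complex_hilbert)) = cmod c * norm x"
proof -
  have "cinner (scaleC c x) (scaleC c x) = (cnj c * c) * cinner x x"
    by (simp add: cinner_scaleC_left cinner_scaleC_right mult.assoc)
  also have "cnj c * c = complex_of_real ((cmod c)^2)"
    by (metis complex_norm_square mult.commute)
  finally have "cinner (scaleC c x) (scaleC c x) = complex_of_real ((cmod c * norm x)^2)"
    by (simp add: cinner_self power_mult_distrib)
  then have "(norm (scaleC c x))^2 = (cmod c * norm x)^2"
    by (metis Re_cinner_self Re_complex_of_real)
  then show ?thesis by (simp add: power2_eq_iff_nonneg)
qed

lemma cinner_cauchy_schwarz: "cmod (cinner x (y::'a::complex_hilbert)) \<le> norm x * norm y"
proof (cases "cinner x y = 0")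
  case True then show ?thesis by simp
next
  case False
  define u where "u = cnj (cinner x y) / cmod (cinner x y)"
  have "cmod u = 1" using False by (simp add: u_def norm_divide)
  have "cinner x (scaleC u y) = complex_of_real (cmod (cinner x y))"
  proof -
    have "cinner x (scaleC u y) = cnj (cinner x y) * cinner x y / complex_of_real (cmod (cinner x y))"
      by (simp add: u_def cinner_scaleC_right)
    also have "cnj (cinner x y) * cinner x y = complex_of_real ((cmod (cinner x y))^2)"
      by (metis complex_norm_square mult.commute)
    finally show ?thesis using False by (simp add: power2_eq_square)
  qed
  then have "cmod (cinner x y) = Re (cinner x (scaleC u y))" by simp
  also have "\<dots> \<le> norm x * norm (scaleC u y)" by (rule Re_cinner_le)
  also have "norm (scaleC u y) = norm y" by (simp add: norm_scaleC \<open>cmod u = 1\<close>)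
  finally show ?thesis .
qed

lemma norm_eq_zero_by_inner: "(\<And>y. cinner x y = 0) \<Longrightarrow> (x::'a::complex_hilbert) = 0"
  by (metis cinner_self_eq_0)

lemma tendsto_cinner[tendsto_intros]:
  assumes "(f \<longlongrightarrow> a) F" "(g \<longlongrightarrow> b) F"
  shows "((\<lambda>n. cinner (f n) (g n :: 'a::complex_hilbert)) \<longlongrightarrow> cinner a b) F"
proof -
  have eq: "cinner (f n) (g n) - cinner a b = cinner (f n - a) (g n) + cinner a (g n - b)" for n
    by (simp add: cinner_diff_left cinner_diff_right)
  have bg: "((\<lambda>n. norm (f n - a) * norm (g n)) \<longlongrightarrow> 0 * norm b) F"
    by (intro tendsto_intros tendsto_norm_zero LIM_zero assms)
  have bg2: "((\<lambda>n. norm a * norm (g n - b)) \<longlongrightarrow> norm a * 0) F"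
    by (intro tendsto_intros tendsto_norm_zero LIM_zero assms)
  have "((\<lambda>n. cinner (f n - a) (g n) + cinner a (g n - b)) \<longlongrightarrow> 0) F"
  proof (rule tendsto_0_le[of "\<lambda>n. norm (f n - a) * norm (g n) + norm a * norm (g n - b)" F _ 1])
    show "((\<lambda>n. norm (f n - a) * norm (g n) + norm a * norm (g n - b)) \<longlongrightarrow> 0) F"
      using tendsto_add[OF bg bg2] by simp
    show "\<forall>\<^sub>F n in F. norm (cinner (f n - a) (g n) + cinner a (g n - b))
          \<le> norm (norm (f n - a) * norm (g n) + norm a * norm (g n - b)) * 1"
      by (intro always_eventually allI order.trans[OF norm_triangle_ineq])
         (simp add: add_mono cinner_cauchy_schwarz)
  qed
  then have "((\<lambda>n. cinner (f n) (g n) - cinner a b) \<longlongrightarrow> 0) F" using eq by simp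
  then show ?thesis by (rule LIM_zero_cancel)
qed

section \<open>Subspaces and orthogonal complements\<close>

definition orth :: "'a::complex_hilbert set \<Rightarrow> 'a set" where
  "orth K = {x. \<forall>y\<in>K. cinner y x = 0}"

lemma csub_zero: "closed_csubspace K \<Longrightarrow> 0 \<in> K"
  by (simp add: closed_csubspace_def)
lemma csub_add: "closed_csubspace K \<Longrightarrow> x \<in> K \<Longrightarrow> y \<in> K \<Longrightarrow> x + y \<in> K"
  by (simp add: closed_csubspace_def)
lemma csub_scaleC: "closed_csubspace K \<Longrightarrow> x \<in> K \<Longrightarrow> scaleC c x \<in> K"
  by (simp add: closed_csubspace_def)
lemma csub_closed: "closed_csubspace K \<Longrightarrow> closed K"
  by (simp add: closed_csubspace_def)
lemma csub_scaleR: "closed_csubspace K \<Longrightarrow> x \<in> K \<Longrightarrow> r *\<^sub>R x \<in> K"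
  by (simp add: closed_csubspace_def scaleR_scaleC)
lemma csub_uminus: "closed_csubspace K \<Longrightarrow> x \<in> K \<Longrightarrow> - x \<in> K"
  using csub_scaleC[where c="-1"] by (simp add: scaleC_minus_left scaleC_one)
lemma csub_diff: "closed_csubspace K \<Longrightarrow> x \<in> K \<Longrightarrow> y \<in> K \<Longrightarrow> x - y \<in> K"
  using csub_add[of K x "-y"] csub_uminus[of K y] by simp
lemma csub_sum: "closed_csubspace K \<Longrightarrow> (\<And>i. i \<in> I \<Longrightarrow> f i \<in> K) \<Longrightarrow> sum f I \<in> K"
  by (induction I rule: infinite_finite_induct) (auto simp: csub_zero csub_add)

lemma orth_iff: "x \<in> orth K \<longleftrightarrow> (\<forall>y\<in>K. cinner y x = 0)"
  by (simp add: orth_def)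

lemma orth_iff': "x \<in> orth K \<longleftrightarrow> (\<forall>y\<in>K. cinner x y = 0)"
proof -
  have "cinner y x = 0 \<longleftrightarrow> cinner x y = 0" for y
    using cinner_commute[of x y] by simp
  then show ?thesis by (simp add: orth_def)
qed

lemma closed_orth: "closed (orth K)"
proof -
  have "orth K = (\<Inter>y\<in>K. {x. cinner y x = 0})" by (auto simp: orth_def)
  moreover have "closed {x. cinner y x = (0::complex)}" for y :: 'a
  proof -
    have "isCont (\<lambda>x. cinner y x) x" for x
      unfolding isCont_def by (intro tendsto_cinner tendsto_const tendsto_ident_at)
    then have "continuous_on UNIV (\<lambda>x. cinner y x)"
      by (simp add: continuous_at_imp_continuous_on)
    then show ?thesis using closed_Collect_eq[of "\<lambda>x. cinner y x" "\<lambda>x. 0"] by simp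
  qed
  ultimately show ?thesis by (metis closed_INT)
qed

lemma csub_orth: "closed_csubspace (orth K)"
  unfolding closed_csubspace_def using closed_orth[of K]
  by (auto simp: orth_def cinner_add_right cinner_scaleC_right)

lemma orth_antimono: "A \<subseteq> B \<Longrightarrow> orth B \<subseteq> orth A"
  by (auto simp: orth_def)

lemma orth_inter_zero: "x \<in> K \<Longrightarrow> x \<in> orth K \<Longrightarrow> x = 0"
  by (auto simp: orth_def)

lemma real_le0_lemma:
  fixes R c :: real
  assumes "\<forall>t>0. 2 * t * R \<le> t^2 * c" "c \<ge> 0"
  shows "R \<le> 0"
proof (rule ccontr)
  assume "\<not> R \<le> 0"
  then have R: "R > 0" by simp
  define t where "t = R / (c + 1)"
  have t: "t > 0" using R assms(2) by (simp add: t_def)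
  have "2 * t * R \<le> t^2 * c" using assms(1) t by blast
  then have "2 * R \<le> t * c" using t by (simp add: power2_eq_square mult.assoc)
  also have "t * c < R" using R assms(2) by (simp add: t_def field_simps)
  finally show False using R by simp
qed

lemma projection_exists:
  fixes K :: "'a::complex_hilbert set"
  assumes K: "closed_csubspace K"
  shows "\<exists>p\<in>K. x - p \<in> orth K"
proof -
  define D where "D = (\<lambda>k. (norm (x - k))^2) ` K"
  define d where "d = Inf D"
  have Dne: "D \<noteq> {}" using csub_zero[OF K] by (auto simp: D_def)
  have Dbdd: "bdd_below D" by (auto simp: D_def intro!: bdd_belowI[of _ 0])
  have dle: "d \<le> (norm (x - k))^2" if "k \<in> K" for k
    unfolding d_def by (rule cInf_lower) (use that Dbdd in \<open>auto simp: D_def\<close>)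
  have "\<exists>y\<in>K. (norm (x - y))^2 < d + 1 / (real n + 1)" for n
  proof -
    have "Inf D < d + 1 / (real n + 1)" by (simp add: d_def)
    then obtain z where "z \<in> D" "z < d + 1 / (real n + 1)" using cInf_lessD[OF Dne] by blast
    then show ?thesis by (auto simp: D_def)
  qed
  then obtain y where yK: "\<And>n. y n \<in> K" and yd: "\<And>n. (norm (x - y n))^2 < d + 1 / (real n + 1)"
    by metis
  have para: "(norm (y m - y n))^2 \<le> 2 / (real n + 1) + 2 / (real m + 1)" for m n
  proof -
    define a where "a = x - y n"
    define b where "b = x - y m"
    have "(norm (a + b))^2 + (norm (a - b))^2 = 2 * (norm a)^2 + 2 * (norm b)^2"
      by (simp add: norm_add_sq norm_diff_sq)
    moreover have "a - b = y m - y n" by (simp add: a_def b_def)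
    moreover have "a + b = 2 *\<^sub>R (x - (1/2) *\<^sub>R (y n + y m))"
      by (simp add: a_def b_def algebra_simps scaleR_2)
    moreover have "d \<le> (norm (x - (1/2) *\<^sub>R (y n + y m)))^2"
      by (rule dle) (intro csub_scaleR csub_add K yK)
    ultimately have "(norm (y m - y n))^2 \<le> 2 * (norm a)^2 + 2 * (norm b)^2 - 4 * d"
      by (simp add: power_mult_distrib)
    then show ?thesis using yd[of n] yd[of m] by (simp add: a_def b_def)
  qed
  have "Cauchy y"
  proof (rule metric_CauchyI)
    fix e :: real assume e: "e > 0"
    obtain N :: nat where N: "4 / e^2 < real N" using reals_Archimedean2 by blast
    have "dist (y m) (y n) < e" if "m \<ge> N" "n \<ge> N" for m n
    proof -
      have "2 / (real n + 1) \<le> 2 / (real N + 1)" "2 / (real m + 1) \<le> 2 / (real N + 1)"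
        using that by (auto simp: divide_left_mono)
      moreover have "4 / (real N + 1) < e^2"
      proof -
        have "4 < e^2 * real N" using N e by (simp add: field_simps)
        also have "\<dots> \<le> e^2 * (real N + 1)" using e by simp
        finally show ?thesis by (simp add: field_simps)
      qed
      ultimately have "(norm (y m - y n))^2 < e^2" using para[of m n] by linarith
      then show ?thesis by (simp add: dist_norm power_less_imp_less_base e less_imp_le)
    qed
    then show "\<exists>M. \<forall>m\<ge>M. \<forall>n\<ge>M. dist (y m) (y n) < e" by blast
  qed
  then obtain p where yp: "y \<longlonglongrightarrow> p" using convergent_def Cauchy_convergent_iff by blast
  have pK: "p \<in> K" using closed_sequentially[OF csub_closed[OF K] yK yp] .
  have h0: "(\<lambda>n. 1 / (real n + 1)) \<longlonglongrightarrow> 0"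
    using LIMSEQ_inverse_real_of_nat by (simp add: inverse_eq_divide add.commute)
  have h1: "((\<lambda>n. d + 1 / (real n + 1)) \<longlongrightarrow> d) sequentially"
    using tendsto_add[OF tendsto_const h0, of d] by simp
  have h2: "((\<lambda>n. (norm (x - y n))^2) \<longlongrightarrow> (norm (x - p))^2) sequentially"
    by (intro tendsto_intros yp)
  have h3: "\<forall>\<^sub>F n in sequentially. (norm (x - y n))^2 \<le> d + 1 / (real n + 1)"
    using yd by (simp add: less_imp_le)
  have "(norm (x - p))^2 \<le> d"
    by (rule tendsto_le[OF _ h1 h2 h3]) simp
  then have pmin: "(norm (x - p))^2 \<le> (norm (x - k))^2" if "k \<in> K" for k using dle[OF that] by linarith
  have Re0: "Re (cinner (x - p) k) = 0" if kK: "k \<in> K" for k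
  proof -
    have ineq: "2 * t * Re (cinner (x - p) k) \<le> t^2 * (norm k)^2"
      if "k \<in> K" for t k
    proof -
      have eq: "x - (p + t *\<^sub>R k) = (x - p) - t *\<^sub>R k" by (simp add: diff_diff_eq)
      have "(norm (x - p))^2 \<le> (norm ((x - p) - t *\<^sub>R k))^2"
        using pmin[OF csub_add[OF K pK csub_scaleR[OF K that, of t]]] unfolding eq .
      also have "\<dots> = (norm (x - p))^2 + t^2 * (norm k)^2 - 2 * t * Re (cinner (x - p) k)"
        by (simp add: norm_diff_sq cinner_scaleR_right power_mult_distrib)
      finally show ?thesis by simp
    qed
    have "Re (cinner (x - p) k) \<le> 0"
      by (rule real_le0_lemma[of _ "(norm k)^2"]) (use ineq[OF kK] in auto)
    moreover have "Re (cinner (x - p) (-k)) \<le> 0"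
      by (rule real_le0_lemma[of _ "(norm (-k))^2"]) (use ineq[OF csub_uminus[OF K kK]] in auto)
    ultimately show ?thesis by (simp add: cinner_minus_right)
  qed
  have "cinner (x - p) k = 0" if kK: "k \<in> K" for k
  proof -
    have "Re (cinner (x - p) (scaleC \<i> k)) = 0" by (rule Re0) (rule csub_scaleC[OF K kK])
    then have "Im (cinner (x - p) k) = 0" by (simp add: cinner_scaleC_right)
    then show ?thesis using Re0[OF kK] by (simp add: complex_eq_iff)
  qed
  then show ?thesis using pK by (auto simp: orth_iff')
qed

lemma projection_unique:
  assumes K: "closed_csubspace K"
    and "p \<in> K" "x - p \<in> orth K" "q \<in> K" "x - q \<in> orth K"
  shows "p = q"
proof -
  have "p - q \<in> K" using assms by (simp add: csub_diff)
  moreover have "p - q \<in> orth K"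
    using csub_diff[OF csub_orth assms(5) assms(3)] by (simp add: algebra_simps)
  ultimately show ?thesis using orth_inter_zero by fastforce
qed

definition proj :: "'a::complex_hilbert set \<Rightarrow> 'a \<Rightarrow> 'a" where
  "proj K x = (THE p. p \<in> K \<and> x - p \<in> orth K)"

lemma proj_props:
  assumes K: "closed_csubspace K"
  shows "proj K x \<in> K" "x - proj K x \<in> orth K"
proof -
  have "\<exists>!p. p \<in> K \<and> x - p \<in> orth K"
    using projection_exists[OF K, of x] projection_unique[OF K] by blast
  then have "proj K x \<in> K \<and> x - proj K x \<in> orth K"
    unfolding proj_def by (rule theI')
  then show "proj K x \<in> K" "x - proj K x \<in> orth K" by auto
qed

lemma proj_eqI:
  assumes K: "closed_csubspace K" and "p \<in> K" "x - p \<in> orth K"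
  shows "proj K x = p"
  using projection_unique[OF K proj_props[OF K, of x] assms(2,3)] .

lemma proj_add: assumes K: "closed_csubspace K" shows "proj K (x + y) = proj K x + proj K y"
proof (rule proj_eqI[OF K])
  show "proj K x + proj K y \<in> K" by (intro csub_add K proj_props)
  have eq: "(x + y) - (proj K x + proj K y) = (x - proj K x) + (y - proj K y)" by simp
  show "(x + y) - (proj K x + proj K y) \<in> orth K"
    unfolding eq by (rule csub_add[OF csub_orth proj_props(2)[OF K, of x] proj_props(2)[OF K, of y]])
qed

lemma proj_scaleC: assumes K: "closed_csubspace K" shows "proj K (scaleC c x) = scaleC c (proj K x)"
proof (rule proj_eqI[OF K])
  show "scaleC c (proj K x) \<in> K" by (intro csub_scaleC K proj_props)
  show "scaleC c x - scaleC c (proj K x) \<in> orth K"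
    using csub_scaleC[OF csub_orth proj_props(2)[OF K, of x], where c=c] by (simp add: scaleC_diff_right)
qed

lemma proj_id: "closed_csubspace K \<Longrightarrow> x \<in> K \<Longrightarrow> proj K x = x"
  by (rule proj_eqI) (auto simp: csub_zero[OF csub_orth])

lemma proj_orth: "closed_csubspace K \<Longrightarrow> x \<in> orth K \<Longrightarrow> proj K x = 0"
  by (rule proj_eqI) (auto simp: csub_zero)

lemma proj_norm_sq:
  assumes K: "closed_csubspace K"
  shows "(norm x)^2 = (norm (proj K x))^2 + (norm (x - proj K x))^2"
proof -
  have "cinner (proj K x) (x - proj K x) = 0" using proj_props[OF K, of x] by (auto simp: orth_iff)
  moreover have "proj K x + (x - proj K x) = x" by simp
  ultimately show ?thesis using norm_add_sq[of "proj K x" "x - proj K x"] by (simp only:) simp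
qed

lemma proj_norm_le: "closed_csubspace K \<Longrightarrow> norm (proj K x) \<le> norm x"
proof (rule power2_le_imp_le)
  assume K: "closed_csubspace K"
  show "(norm (proj K x))^2 \<le> (norm x)^2" using proj_norm_sq[OF K, of x] by simp
qed simp

section \<open>Bounded operators\<close>

definition blin :: "('a::complex_hilbert \<Rightarrow> 'a) \<Rightarrow> bool" where
  "blin T \<longleftrightarrow> (\<forall>x y. T (x + y) = T x + T y) \<and> (\<forall>c x. T (scaleC c x) = scaleC c (T x))
     \<and> (\<exists>C. \<forall>x. norm (T x) \<le> C * norm x)"

lemma blin_iff: "blin T \<longleftrightarrow> bounded_clinear_on UNIV T"
  by (simp add: blin_def bounded_clinear_on_def)

definition sa :: "('a::complex_hilbert \<Rightarrow> 'a) \<Rightarrow> bool" where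
  "sa T \<longleftrightarrow> (\<forall>x y. cinner (T x) y = cinner x (T y))"

definition pos :: "('a::complex_hilbert \<Rightarrow> 'a) \<Rightarrow> bool" where
  "pos T \<longleftrightarrow> (\<forall>x. 0 \<le> Re (cinner (T x) x))"

lemma blin_add: "blin T \<Longrightarrow> T (x + y) = T x + T y" by (simp add: blin_def)
lemma blin_scaleC: "blin T \<Longrightarrow> T (scaleC c x) = scaleC c (T x)" by (simp add: blin_def)
lemma blin_scaleR: "blin T \<Longrightarrow> T (r *\<^sub>R x) = r *\<^sub>R (T x)" by (simp add: blin_def scaleR_scaleC)
lemma blin_zero: "blin T \<Longrightarrow> T 0 = 0" using blin_scaleR[of T 0 0] by simp
lemma blin_minus: "blin T \<Longrightarrow> T (- x) = - T x" using blin_scaleR[of T "-1" x] by simp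
lemma blin_diff: "blin T \<Longrightarrow> T (x - y) = T x - T y"
  using blin_add[of T x "-y"] blin_minus[of T y] by simp

lemma blin_bound: "blin T \<Longrightarrow> \<exists>C>0. \<forall>x. norm (T x) \<le> C * norm x"
proof -
  assume "blin T"
  then obtain C where C: "\<forall>x. norm (T x) \<le> C * norm x" by (auto simp: blin_def)
  have "norm (T x) \<le> (\<bar>C\<bar> + 1) * norm x" for x
    using C[rule_format, of x] by (smt (verit, best) mult_right_mono norm_ge_zero)
  then show ?thesis by (intro exI[of _ "\<bar>C\<bar> + 1"]) auto
qed

lemma blin_tendsto:
  assumes T: "blin T" and f: "(f \<longlongrightarrow> a) F"
  shows "((\<lambda>n. T (f n)) \<longlongrightarrow> T a) F"
proof -
  obtain C where C: "C > 0" "\<And>x. norm (T x) \<le> C * norm x" using blin_bound[OF T] by blast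
  have "((\<lambda>n. C * norm (f n - a)) \<longlongrightarrow> C * 0) F"
    by (intro tendsto_intros tendsto_norm_zero LIM_zero f)
  then have h: "((\<lambda>n. C * norm (f n - a)) \<longlongrightarrow> 0) F" by simp
  have ev: "\<forall>\<^sub>F n in F. norm (T (f n) - T a) \<le> norm (C * norm (f n - a)) * 1"
  proof (intro always_eventually allI)
    fix n
    have "norm (T (f n) - T a) = norm (T (f n - a))" by (simp add: blin_diff[OF T])
    also have "\<dots> \<le> C * norm (f n - a)" by (rule C(2))
    also have "\<dots> \<le> norm (C * norm (f n - a)) * 1" by simp
    finally show "norm (T (f n) - T a) \<le> norm (C * norm (f n - a)) * 1" .
  qed
  have "((\<lambda>n. T (f n) - T a) \<longlongrightarrow> 0) F"
    by (rule tendsto_0_le[OF h ev])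
  then show ?thesis by (rule LIM_zero_cancel)
qed

lemma blin_isCont: "blin T \<Longrightarrow> isCont T x"
  unfolding isCont_def by (rule blin_tendsto) (auto intro: tendsto_ident_at)

lemma blin_continuous_on: "blin T \<Longrightarrow> continuous_on S T"
  by (simp add: blin_isCont continuous_at_imp_continuous_on)

lemma closed_kernel: "blin T \<Longrightarrow> closed {x. T x = 0}"
  using closed_Collect_eq[of T "\<lambda>x. 0"] by (simp add: blin_continuous_on)

lemma csub_kernel: assumes T: "blin T" shows "closed_csubspace {x. T x = 0}"
  unfolding closed_csubspace_def using closed_kernel[OF T]
  by (simp add: blin_add[OF T] blin_scaleC[OF T] blin_zero[OF T])

lemma blin_comp: "blin T \<Longrightarrow> blin U \<Longrightarrow> blin (\<lambda>x. T (U x))"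
proof -
  assume T: "blin T" and U: "blin U"
  obtain C where C: "\<And>x. norm (T x) \<le> C * norm x" "C > 0" using blin_bound[OF T] by blast
  obtain D where D: "\<And>x. norm (U x) \<le> D * norm x" using blin_bound[OF U] by blast
  have "norm (T (U x)) \<le> (C * D) * norm x" for x
    using C(1)[of "U x"] D[of x] C(2) by (smt (verit) mult.assoc mult_left_mono)
  moreover have "T (U (x + y)) = T (U x) + T (U y)" for x y
    by (simp add: blin_add[OF T] blin_add[OF U])
  moreover have "T (U (scaleC c x)) = scaleC c (T (U x))" for c x
    by (simp add: blin_scaleC[OF T] blin_scaleC[OF U])
  ultimately show ?thesis unfolding blin_def by blast
qed

lemma blin_plus: "blin T \<Longrightarrow> blin U \<Longrightarrow> blin (\<lambda>x. T x + U x)"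
proof -
  assume T: "blin T" and U: "blin U"
  obtain C where C: "\<And>x. norm (T x) \<le> C * norm x" using blin_bound[OF T] by blast
  obtain D where D: "\<And>x. norm (U x) \<le> D * norm x" using blin_bound[OF U] by blast
  have "norm (T x + U x) \<le> (C + D) * norm x" for x
    using C[of x] D[of x] norm_triangle_ineq[of "T x" "U x"] by (simp add: distrib_right)
  moreover have "T (x + y) + U (x + y) = (T x + U x) + (T y + U y)" for x y
    by (simp add: blin_add[OF T] blin_add[OF U])
  moreover have "T (scaleC c x) + U (scaleC c x) = scaleC c (T x + U x)" for c x
    by (simp add: blin_scaleC[OF T] blin_scaleC[OF U] scaleC_add_right)
  ultimately show ?thesis unfolding blin_def by blast
qed

lemma blin_scaleR_op: "blin T \<Longrightarrow> blin (\<lambda>x. r *\<^sub>R T x)"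
proof -
  assume T: "blin T"
  obtain C where C: "\<And>x. norm (T x) \<le> C * norm x" using blin_bound[OF T] by blast
  have "norm (r *\<^sub>R T x) \<le> (\<bar>r\<bar> * C) * norm x" for x
    using C[of x] by (simp add: mult.assoc mult_left_mono)
  moreover have "r *\<^sub>R T (scaleC c x) = scaleC c (r *\<^sub>R T x)" for c x
    using T by (simp add: blin_scaleC scaleR_scaleC scaleC_scaleC mult.commute)
  moreover have "r *\<^sub>R T (x + y) = r *\<^sub>R T x + r *\<^sub>R T y" for x y
    by (simp add: blin_add[OF T] scaleR_add_right)
  ultimately show ?thesis unfolding blin_def by blast
qed

lemma blin_id: "blin (\<lambda>x. x)"
  unfolding blin_def by (auto intro!: exI[of _ 1])

lemma blin_diff_op: "blin T \<Longrightarrow> blin U \<Longrightarrow> blin (\<lambda>x. T x - U x)"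
  using blin_plus[of T "\<lambda>x. (-1) *\<^sub>R U x"] blin_scaleR_op[of U "-1"] by simp

lemma blin_funpow: "blin T \<Longrightarrow> blin (T ^^ k)"
proof (induction k)
  case 0 then show ?case using blin_id by (simp add: id_def)
next
  case (Suc k)
  then show ?case using blin_comp[of T "T^^k"] by (simp add: comp_def)
qed

lemma blin_sum: assumes T: "blin T" shows "T (sum f I) = (\<Sum>i\<in>I. T (f i))"
  by (induction I rule: infinite_finite_induct) (auto simp: blin_zero[OF T] blin_add[OF T])

lemma sa_Re: "sa T \<Longrightarrow> Re (cinner (T x) y) = Re (cinner (T y) x)"
  by (metis Re_cinner_commute sa_def)

lemma sa_Im0: "sa T \<Longrightarrow> Im (cinner (T x) x) = 0"
proof -
  assume "sa T"
  then have "cinner (T x) x = cnj (cinner (T x) x)"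
    using cinner_commute[of "T x" x] by (simp add: sa_def)
  then have "Im (cinner (T x) x) = - Im (cinner (T x) x)" by (metis cnj.simps(2))
  then show ?thesis by simp
qed

lemma sa_comp_commute: "sa T \<Longrightarrow> sa U \<Longrightarrow> (\<And>x. T (U x) = U (T x)) \<Longrightarrow> sa (\<lambda>x. T (U x))"
  unfolding sa_def by metis

lemma sa_plus: "sa T \<Longrightarrow> sa U \<Longrightarrow> sa (\<lambda>x. T x + U x)"
  unfolding sa_def by (simp add: cinner_add_left cinner_add_right)

lemma sa_scaleR: "sa T \<Longrightarrow> sa (\<lambda>x. r *\<^sub>R T x)"
  unfolding sa_def by (simp add: cinner_scaleR_left cinner_scaleR_right)

lemma sa_id: "sa (\<lambda>x. x)" by (simp add: sa_def)

lemma sa_diff: "sa T \<Longrightarrow> sa U \<Longrightarrow> sa (\<lambda>x. T x - U x)"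
  unfolding sa_def by (simp add: cinner_diff_left cinner_diff_right)

lemma funpow_commute: "(\<And>x. X (T x) = T (X x)) \<Longrightarrow> X ((T ^^ k) x) = (T ^^ k) (X x)"
  by (induction k arbitrary: x) auto

lemma sa_funpow: "sa T \<Longrightarrow> sa (T ^^ k)"
proof (induction k)
  case 0 then show ?case by (simp add: sa_def)
next
  case (Suc k)
  have "sa (\<lambda>x. T ((T^^k) x))"
    by (rule sa_comp_commute[OF Suc.prems Suc.IH[OF Suc.prems]]) (simp add: funpow_commute)
  then show ?case by (simp add: comp_def)
qed

lemma pos_funpow:
  assumes "sa T" "pos T"
  shows "pos (T ^^ k)"
proof -
  obtain m where "k = 2 * m \<or> k = 2 * m + 1" by (metis oddE evenE)
  then show ?thesis
  proof
    assume k: "k = 2 * m"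
    have "(T^^k) x = (T^^m) ((T^^m) x)" for x by (simp add: k funpow_add mult_2)
    then have "cinner ((T^^k) x) x = cinner ((T^^m) x) ((T^^m) x)" for x
      using sa_funpow[OF assms(1), of m] by (simp add: sa_def)
    then show ?thesis by (simp add: pos_def Re_cinner_self)
  next
    assume k: "k = 2 * m + 1"
    have "(T^^k) x = (T^^m) (T ((T^^m) x))" for x
      by (simp add: k funpow_add mult_2 funpow_swap1)
    then have "cinner ((T^^k) x) x = cinner (T ((T^^m) x)) ((T^^m) x)" for x
      using sa_funpow[OF assms(1), of m] by (simp add: sa_def)
    then show ?thesis using assms(2) by (simp add: pos_def)
  qed
qed

lemma quad_lemma:
  fixes a b c :: real
  assumes "\<And>t. 0 \<le> a + 2 * b * t + c * t^2" "c \<ge> 0"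
  shows "b^2 \<le> a * c"
proof (cases "c = 0")
  case True
  have "b = 0"
  proof (rule ccontr)
    assume "b \<noteq> 0"
    have "0 \<le> a + 2 * b * (- (\<bar>a\<bar> + 1) / (2 * b)) + c * (- (\<bar>a\<bar> + 1) / (2 * b))^2"
      by (rule assms(1))
    then have "0 \<le> a + 2 * b * (- (\<bar>a\<bar> + 1) / (2 * b))" using True by simp
    also have "\<dots> = a - (\<bar>a\<bar> + 1)" using \<open>b \<noteq> 0\<close> by (simp add: field_simps)
    finally show False by simp
  qed
  then show ?thesis using True by simp
next
  case False
  then have c: "c > 0" using assms(2) by simp
  have "0 \<le> a + 2 * b * (- b / c) + c * (- b / c)^2" by (rule assms(1))
  also have "\<dots> = a - b^2 / c" using c by (simp add: field_simps power2_eq_square)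
  finally show ?thesis using c by (simp add: field_simps)
qed

lemma gen_cauchy_schwarz:
  assumes T: "blin T" "sa T" "pos T" and w: "w \<ge> 0" "\<And>x. norm (T x) \<le> w * norm x"
  shows "(norm (T x))^2 \<le> w * Re (cinner (T x) x)"
proof -
  define q where "q u v = Re (cinner (T u) v)" for u v
  have qpos: "q u u \<ge> 0" for u using T(3) by (simp add: q_def pos_def)
  have qsym: "q u v = q v u" for u v using sa_Re[OF T(2)] by (simp add: q_def)
  have cs: "(q u v)^2 \<le> q u u * q v v" for u v
  proof (rule quad_lemma[OF _ qpos])
    fix t :: real
    have "q (u + t *\<^sub>R v) (u + t *\<^sub>R v) = q u u + 2 * q u v * t + q v v * t^2"
      using qsym[of v u]
      by (simp add: q_def blin_add[OF T(1)] blin_scaleR[OF T(1)] cinner_add_left cinner_add_right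
          cinner_scaleR_left cinner_scaleR_right algebra_simps power2_eq_square)
    then show "0 \<le> q u u + 2 * q u v * t + q v v * t^2" using qpos by metis
  qed
  have "q x (T x) = (norm (T x))^2"
    using qsym by (simp add: q_def Re_cinner_self)
  moreover have "q (T x) (T x) \<le> w * (norm (T x))^2"
  proof -
    have "q (T x) (T x) \<le> norm (T (T x)) * norm (T x)" unfolding q_def by (rule Re_cinner_le)
    also have "\<dots> \<le> w * norm (T x) * norm (T x)" using w(2)[of "T x"] by (simp add: mult_right_mono)
    finally show ?thesis by (simp add: power2_eq_square mult.assoc)
  qed
  ultimately have "(norm (T x))^2 * (norm (T x))^2 \<le> (q x x * w) * (norm (T x))^2"
  proof -
    assume h1: "q x (T x) = (norm (T x))^2" and h2: "q (T x) (T x) \<le> w * (norm (T x))^2"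
    have "(norm (T x))^2 * (norm (T x))^2 = (q x (T x))^2" by (simp add: h1 power2_eq_square)
    also have "\<dots> \<le> q x x * q (T x) (T x)" by (rule cs)
    also have "\<dots> \<le> q x x * (w * (norm (T x))^2)" by (rule mult_left_mono[OF h2 qpos])
    finally show ?thesis by (simp add: mult.assoc)
  qed
  then have "(norm (T x))^2 \<le> q x x * w"
  proof (cases "norm (T x) = 0")
    case True then show ?thesis using qpos[of x] w(1) by simp
  next
    case False
    then have "(norm (T x))^2 > 0" by simp
    then show ?thesis using \<open>(norm (T x))^2 * (norm (T x))^2 \<le> (q x x * w) * (norm (T x))^2\<close>
      by (rule mult_right_le_imp_le[rotated])
  qed
  then show ?thesis by (simp add: q_def mult.commute)
qed

section \<open>Polynomials with nonnegative coefficients in a positive operator\<close>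

inductive_set mpoly :: "('a::complex_hilbert \<Rightarrow> 'a) \<Rightarrow> ('a \<Rightarrow> 'a) set" for S where
  mp0: "(\<lambda>x. 0) \<in> mpoly S"
| mpS: "D \<in> mpoly S \<Longrightarrow> r \<ge> 0 \<Longrightarrow> (\<lambda>x. D x + r *\<^sub>R (S ^^ k) x) \<in> mpoly S"

lemma mpoly_cong: "D \<in> mpoly S \<Longrightarrow> (\<And>x. D' x = D x) \<Longrightarrow> D' \<in> mpoly S"
proof -
  assume "D \<in> mpoly S" "\<And>x. D' x = D x"
  moreover have "D' = D" using \<open>\<And>x. D' x = D x\<close> by (rule ext)
  ultimately show ?thesis by simp
qed

lemma mpoly_blin: "D \<in> mpoly S \<Longrightarrow> blin S \<Longrightarrow> blin D"
proof (induction rule: mpoly.induct)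
  case mp0
  show ?case unfolding blin_def by (auto intro!: exI[of _ 0])
next
  case (mpS D r k)
  show ?case by (intro blin_plus blin_scaleR_op blin_funpow mpS)
qed

lemma mpoly_sa: "D \<in> mpoly S \<Longrightarrow> sa S \<Longrightarrow> sa D"
proof (induction rule: mpoly.induct)
  case mp0
  show ?case by (simp add: sa_def)
next
  case (mpS D r k)
  show ?case by (intro sa_plus sa_scaleR sa_funpow mpS)
qed

lemma mpoly_pos: "D \<in> mpoly S \<Longrightarrow> sa S \<Longrightarrow> pos S \<Longrightarrow> pos D"
proof (induction rule: mpoly.induct)
  case mp0
  show ?case by (simp add: pos_def)
next
  case (mpS D r k)
  have "pos (S^^k)" by (rule pos_funpow[OF mpS(4,5)])
  then have "0 \<le> r * Re (cinner ((S^^k) x) x)" for x using mpS(2) by (simp add: pos_def)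
  moreover have "0 \<le> Re (cinner (D x) x)" for x using mpS(3)[OF mpS(4,5)] by (simp add: pos_def)
  ultimately show ?case by (simp add: pos_def cinner_add_left cinner_scaleR_left)
qed

lemma mpoly_commute:
  assumes "D \<in> mpoly S" "blin X" "\<And>x. X (S x) = S (X x)"
  shows "X (D x) = D (X x)"
  using assms(1)
proof (induction arbitrary: x rule: mpoly.induct)
  case mp0
  show ?case by (simp add: blin_zero[OF assms(2)])
next
  case (mpS D r k)
  show ?case using mpS(3) funpow_commute[of X S, OF assms(3)]
    by (simp add: blin_add[OF assms(2)] blin_scaleR[OF assms(2)])
qed

lemma mpoly_add: assumes D1: "D1 \<in> mpoly S" shows "D2 \<in> mpoly S \<Longrightarrow> (\<lambda>x. D1 x + D2 x) \<in> mpoly S"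
proof (induction D2 rule: mpoly.induct)
  case mp0
  then show ?case using D1 by simp
next
  case (mpS D r k)
  have "(\<lambda>x. (D1 x + D x) + r *\<^sub>R (S ^^ k) x) \<in> mpoly S"
    by (rule mpoly.mpS[OF mpS(3) mpS(2)])
  then show ?case by (rule mpoly_cong) (simp add: add.assoc)
qed

lemma mpoly_scale: "D \<in> mpoly S \<Longrightarrow> r \<ge> 0 \<Longrightarrow> (\<lambda>x. r *\<^sub>R D x) \<in> mpoly S"
proof (induction D rule: mpoly.induct)
  case mp0
  show ?case by (simp add: mpoly.mp0)
next
  case (mpS D s k)
  have "(\<lambda>x. r *\<^sub>R D x + (r * s) *\<^sub>R (S ^^ k) x) \<in> mpoly S"
    by (rule mpoly.mpS[OF mpS(3)[OF mpS(4)]]) (use mpS(2) mpS(4) in simp)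
  then show ?case by (rule mpoly_cong) (simp add: scaleR_add_right)
qed

lemma mpoly_S: "S \<in> mpoly S"
proof -
  have "(\<lambda>x. (\<lambda>x. 0) x + 1 *\<^sub>R (S ^^ 1) x) \<in> mpoly S" by (rule mpoly.mpS[OF mpoly.mp0]) simp
  then show ?thesis by (rule mpoly_cong) simp
qed

lemma mpoly_pow_comp: "D \<in> mpoly S \<Longrightarrow> (\<lambda>x. D ((S ^^ j) x)) \<in> mpoly S"
proof (induction D rule: mpoly.induct)
  case mp0
  show ?case by (simp add: mpoly.mp0)
next
  case (mpS D r k)
  have "(\<lambda>x. D ((S ^^ j) x) + r *\<^sub>R (S ^^ (k + j)) x) \<in> mpoly S"
    by (rule mpoly.mpS[OF mpS(3) mpS(2)])
  then show ?case by (rule mpoly_cong) (simp add: funpow_add)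
qed

lemma mpoly_comp:
  assumes S: "blin S" and D1: "D1 \<in> mpoly S"
  shows "D2 \<in> mpoly S \<Longrightarrow> (\<lambda>x. D1 (D2 x)) \<in> mpoly S"
proof (induction D2 rule: mpoly.induct)
  case mp0
  have "blin D1" using mpoly_blin[OF D1 S] .
  then show ?case by (simp add: blin_zero mpoly.mp0)
next
  case (mpS D r k)
  have B: "blin D1" using mpoly_blin[OF D1 S] .
  have "(\<lambda>x. D1 (D x) + r *\<^sub>R D1 ((S ^^ k) x)) \<in> mpoly S"
    by (intro mpoly_add mpS(3) mpoly_scale mpoly_pow_comp D1 mpS(2))
  then show ?case by (rule mpoly_cong) (simp add: blin_add[OF B] blin_scaleR[OF B])
qed

section \<open>Square root iteration\<close>

primrec Yseq :: "('a::complex_hilbert \<Rightarrow> 'a) \<Rightarrow> nat \<Rightarrow> 'a \<Rightarrow> 'a" where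
  "Yseq S 0 = (\<lambda>x. 0)"
| "Yseq S (Suc n) = (\<lambda>x. (1/2) *\<^sub>R (S x + Yseq S n (Yseq S n x)))"

lemma Yseq_mpoly: assumes S: "blin S" shows "Yseq S n \<in> mpoly S"
proof (induction n)
  case 0 then show ?case using mpoly.mp0 by simp
next
  case (Suc n)
  have "(\<lambda>x. (1/2) *\<^sub>R (S x + Yseq S n (Yseq S n x))) \<in> mpoly S"
    by (intro mpoly_scale mpoly_add mpoly_S mpoly_comp[OF S Suc] Suc) simp
  then show ?case by simp
qed

lemma Yseq_norm: assumes S: "\<And>x. norm (S x) \<le> norm x" shows "norm (Yseq S n x) \<le> norm x"
proof (induction n arbitrary: x)
  case 0 then show ?case by simp
next
  case (Suc n)
  have "norm (S x + Yseq S n (Yseq S n x)) \<le> norm x + norm x"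
    using norm_triangle_ineq[of "S x" "Yseq S n (Yseq S n x)"] S[of x]
      Suc[of "Yseq S n x"] Suc[of x] by linarith
  then show ?case by simp
qed

lemma Yseq_diff_mpoly:
  assumes S: "blin S"
  shows "(\<lambda>x. Yseq S (Suc n) x - Yseq S n x) \<in> mpoly S"
proof (induction n)
  case 0
  have "(\<lambda>x. (1/2) *\<^sub>R S x) \<in> mpoly S" by (intro mpoly_scale mpoly_S) simp
  then show ?case by (rule mpoly_cong) simp
next
  case (Suc n)
  define Y1 where "Y1 = Yseq S (Suc n)"
  define Y0 where "Y0 = Yseq S n"
  have B1: "blin Y1" unfolding Y1_def by (rule mpoly_blin[OF Yseq_mpoly[OF S] S])
  have B0: "blin Y0" unfolding Y0_def by (rule mpoly_blin[OF Yseq_mpoly[OF S] S])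
  have D: "(\<lambda>x. Y1 x - Y0 x) \<in> mpoly S" using Suc by (simp add: Y1_def Y0_def)
  have Y1S: "Y1 (S x) = S (Y1 x)" for x
    unfolding Y1_def by (rule mpoly_commute[OF Yseq_mpoly[OF S] S, symmetric]) simp
  have com: "Y1 (Y0 x) = Y0 (Y1 x)" for x
    unfolding Y0_def by (rule mpoly_commute[OF Yseq_mpoly[OF S] B1 Y1S])
  have M1: "Y1 \<in> mpoly S" "Y0 \<in> mpoly S" unfolding Y1_def Y0_def by (rule Yseq_mpoly[OF S])+
  have "(\<lambda>x. (1/2) *\<^sub>R ((\<lambda>x. Y1 x - Y0 x) ((\<lambda>x. Y1 x + Y0 x) x))) \<in> mpoly S"
    by (intro mpoly_scale mpoly_comp[OF S D] mpoly_add[OF M1(1) M1(2)]) simp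
  then show ?case
  proof (rule mpoly_cong)
    fix x
    have "Y1 (Y1 x + Y0 x) - Y0 (Y1 x + Y0 x) = Y1 (Y1 x) - Y0 (Y0 x)"
      using com[of x] by (simp add: blin_add[OF B1] blin_add[OF B0])
    then show "Yseq S (Suc (Suc n)) x - Yseq S (Suc n) x
       = (1/2) *\<^sub>R ((\<lambda>x. Y1 x - Y0 x) ((\<lambda>x. Y1 x + Y0 x) x))"
    proof -
      have e1: "Yseq S (Suc (Suc n)) x = (1/2) *\<^sub>R (S x + Y1 (Y1 x))"
        unfolding Y1_def by (simp only: Yseq.simps(2))
      have e0: "Yseq S (Suc n) x = (1/2) *\<^sub>R (S x + Y0 (Y0 x))"
        unfolding Y0_def by (simp only: Yseq.simps(2))
      show ?thesis unfolding e1 e0 \<open>Y1 (Y1 x + Y0 x) - Y0 (Y1 x + Y0 x) = Y1 (Y1 x) - Y0 (Y0 x)\<close>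
        by (simp add: algebra_simps)
    qed
  qed
qed

lemma Yseq_diff_ge_mpoly:
  assumes S: "blin S" and mn: "n \<le> m"
  shows "(\<lambda>x. Yseq S m x - Yseq S n x) \<in> mpoly S"
  using mn
proof (induction m rule: dec_induct)
  case base
  show ?case by (rule mpoly_cong[OF mpoly.mp0]) simp
next
  case (step m)
  have "(\<lambda>x. (Yseq S (Suc m) x - Yseq S m x) + (Yseq S m x - Yseq S n x)) \<in> mpoly S"
    by (rule mpoly_add[OF Yseq_diff_mpoly[OF S] step(3)])
  then show ?case by (rule mpoly_cong) simp
qed

lemma blin_scaleC_op: "blin (\<lambda>x. scaleC c (x::'a::complex_hilbert))"
  unfolding blin_def
  by (auto simp: scaleC_add_right scaleC_scaleC mult.commute norm_scaleC intro!: exI[of _ "cmod c"])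

lemma tendsto_scaleC: "(f \<longlongrightarrow> a) F \<Longrightarrow> ((\<lambda>n. scaleC c (f n :: 'a::complex_hilbert)) \<longlongrightarrow> scaleC c a) F"
  using blin_tendsto[OF blin_scaleC_op] .

definition Ylim :: "('a::complex_hilbert \<Rightarrow> 'a) \<Rightarrow> 'a \<Rightarrow> 'a" where
  "Ylim S x = lim (\<lambda>n. Yseq S n x)"

context
  fixes S :: "'a::complex_hilbert \<Rightarrow> 'a"
  assumes S: "blin S" "sa S" "pos S" "\<And>x. norm (S x) \<le> norm x"
begin

lemma Yseq_conv: "(\<lambda>n. Yseq S n x) \<longlonglongrightarrow> Ylim S x"
proof -
  define a where "a n = Re (cinner (Yseq S n x) x)" for n
  have Dprops: "blin (\<lambda>x. Yseq S m x - Yseq S n x) \<and> sa (\<lambda>x. Yseq S m x - Yseq S n x)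
      \<and> pos (\<lambda>x. Yseq S m x - Yseq S n x)" if "n \<le> m" for m n
    using mpoly_blin[OF Yseq_diff_ge_mpoly[OF S(1) that] S(1)]
      mpoly_sa[OF Yseq_diff_ge_mpoly[OF S(1) that] S(2)]
      mpoly_pos[OF Yseq_diff_ge_mpoly[OF S(1) that] S(2) S(3)] by blast
  have amono: "a n \<le> a m" if "n \<le> m" for m n
    using Dprops[OF that] by (simp add: a_def pos_def cinner_diff_left)
  have "incseq a" by (rule incseq_SucI) (simp add: amono)
  moreover have "a n \<le> (norm x)^2" for n
  proof -
    have "a n \<le> norm (Yseq S n x) * norm x" unfolding a_def by (rule Re_cinner_le)
    also have "\<dots> \<le> norm x * norm x" by (rule mult_right_mono[OF Yseq_norm[OF S(4)]]) simp
    finally show ?thesis by (simp add: power2_eq_square)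
  qed
  ultimately obtain L where "a \<longlonglongrightarrow> L" using incseq_convergent by metis
  then have Ca: "Cauchy a" by (rule LIMSEQ_imp_Cauchy)
  have key: "(norm (Yseq S m x - Yseq S n x))^2 \<le> 2 * (a m - a n)" if "n \<le> m" for m n
  proof -
    have bd: "norm (Yseq S m y - Yseq S n y) \<le> 2 * norm y" for y
      using norm_triangle_ineq4[of "Yseq S m y" "Yseq S n y"] Yseq_norm[OF S(4), of m y]
        Yseq_norm[OF S(4), of n y] by linarith
    have "(norm (Yseq S m x - Yseq S n x))^2 \<le> 2 * Re (cinner (Yseq S m x - Yseq S n x) x)"
      using gen_cauchy_schwarz[of "\<lambda>x. Yseq S m x - Yseq S n x" 2 x] Dprops[OF that] bd by simp
    then show ?thesis by (simp add: a_def cinner_diff_left)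
  qed
  have "Cauchy (\<lambda>n. Yseq S n x)"
  proof (rule metric_CauchyI)
    fix e :: real assume e: "e > 0"
    then have "e^2 / 2 > 0" by simp
    then obtain N where N: "\<And>m n. m \<ge> N \<Longrightarrow> n \<ge> N \<Longrightarrow> dist (a m) (a n) < e^2 / 2"
      using metric_CauchyD[OF Ca] by blast
    have lt: "norm (Yseq S m x - Yseq S n x) < e" if "m \<ge> N" "n \<ge> N" "n \<le> m" for m n
    proof -
      have "(norm (Yseq S m x - Yseq S n x))^2 < e^2"
      proof -
        have h: "\<bar>a m - a n\<bar> < e^2 / 2" using N[OF that(1,2)] by (simp only: dist_real_def)
        have d: "a m - a n < e^2 / 2" using abs_less_iff[THEN iffD1, OF h] by (rule conjunct1)
        have "2 * (a m - a n) < 2 * (e^2 / 2)" by (rule mult_strict_left_mono[OF d]) simp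
        then have "2 * (a m - a n) < e^2" by simp
        then show ?thesis using key[OF that(3)] by (rule order_le_less_trans[rotated])
      qed
      then show ?thesis using e by (simp add: power_less_imp_less_base less_imp_le)
    qed
    have "dist (Yseq S m x) (Yseq S n x) < e" if "m \<ge> N" "n \<ge> N" for m n
    proof (cases "n \<le> m")
      case True then show ?thesis using lt that by (simp add: dist_norm)
    next
      case False then show ?thesis using lt[of n m] that by (simp add: dist_norm norm_minus_commute)
    qed
    then show "\<exists>M. \<forall>m\<ge>M. \<forall>n\<ge>M. dist (Yseq S m x) (Yseq S n x) < e" by blast
  qed
  then have "convergent (\<lambda>n. Yseq S n x)" by (simp add: Cauchy_convergent_iff)
  then show ?thesis by (simp add: Ylim_def convergent_LIMSEQ_iff)
qed

lemma Yseq_blin: "blin (Yseq S n)"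
  by (rule mpoly_blin[OF Yseq_mpoly[OF S(1)] S(1)])

lemma Ylim_add: "Ylim S (x + y) = Ylim S x + Ylim S y"
proof -
  have "(\<lambda>n. Yseq S n (x + y)) \<longlonglongrightarrow> Ylim S x + Ylim S y"
    using tendsto_add[OF Yseq_conv[of x] Yseq_conv[of y]] by (simp add: blin_add[OF Yseq_blin])
  then show ?thesis using Yseq_conv[of "x + y"] LIMSEQ_unique by blast
qed

lemma Ylim_scaleC: "Ylim S (scaleC c x) = scaleC c (Ylim S x)"
proof -
  have "(\<lambda>n. Yseq S n (scaleC c x)) \<longlonglongrightarrow> scaleC c (Ylim S x)"
    using tendsto_scaleC[OF Yseq_conv[of x], of c] by (simp add: blin_scaleC[OF Yseq_blin])
  then show ?thesis using Yseq_conv[of "scaleC c x"] LIMSEQ_unique by blast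
qed

lemma Ylim_norm: "norm (Ylim S x) \<le> norm x"
  by (rule LIMSEQ_le_const2[OF tendsto_norm[OF Yseq_conv[of x]]]) (use Yseq_norm[OF S(4)] in auto)

lemma Ylim_blin: "blin (Ylim S)"
  unfolding blin_def using Ylim_add Ylim_scaleC Ylim_norm by (auto intro!: exI[of _ 1])

lemma Ylim_sa: "sa (Ylim S)"
proof -
  have "cinner (Ylim S x) y = cinner x (Ylim S y)" for x y
  proof -
    have sa_n: "cinner (Yseq S n x) y = cinner x (Yseq S n y)" for n
      using mpoly_sa[OF Yseq_mpoly[OF S(1)] S(2)] by (simp add: sa_def)
    have "(\<lambda>n. cinner (Yseq S n x) y) \<longlonglongrightarrow> cinner (Ylim S x) y"
      by (intro tendsto_cinner Yseq_conv tendsto_const)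
    moreover have "(\<lambda>n. cinner (Yseq S n x) y) \<longlonglongrightarrow> cinner x (Ylim S y)"
      unfolding sa_n by (intro tendsto_cinner Yseq_conv tendsto_const)
    ultimately show ?thesis using LIMSEQ_unique by blast
  qed
  then show ?thesis by (simp add: sa_def)
qed

lemma Ylim_commute:
  assumes X: "blin X" "\<And>x. X (S x) = S (X x)"
  shows "X (Ylim S x) = Ylim S (X x)"
proof -
  have "X (Yseq S n x) = Yseq S n (X x)" for n
    by (rule mpoly_commute[OF Yseq_mpoly[OF S(1)] X])
  then have "(\<lambda>n. Yseq S n (X x)) \<longlonglongrightarrow> X (Ylim S x)"
    using blin_tendsto[OF X(1) Yseq_conv[of x]] by simp
  then show ?thesis using Yseq_conv[of "X x"] LIMSEQ_unique by blast
qed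

lemma Ylim_fix: "Ylim S x = (1/2) *\<^sub>R (S x + Ylim S (Ylim S x))"
proof -
  have "(\<lambda>n. Yseq S n (Yseq S n x - Ylim S x)) \<longlonglongrightarrow> 0"
  proof (rule Lim_null_comparison[where g="\<lambda>n. norm (Yseq S n x - Ylim S x)"])
    show "\<forall>\<^sub>F n in sequentially. norm (Yseq S n (Yseq S n x - Ylim S x)) \<le> norm (Yseq S n x - Ylim S x)"
      using Yseq_norm[OF S(4)] by simp
    show "(\<lambda>n. norm (Yseq S n x - Ylim S x)) \<longlonglongrightarrow> 0"
      by (intro tendsto_norm_zero LIM_zero Yseq_conv)
  qed
  then have "(\<lambda>n. Yseq S n (Yseq S n x - Ylim S x) + Yseq S n (Ylim S x)) \<longlonglongrightarrow> 0 + Ylim S (Ylim S x)"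
    by (intro tendsto_add Yseq_conv)
  then have "(\<lambda>n. Yseq S n (Yseq S n x)) \<longlonglongrightarrow> Ylim S (Ylim S x)"
    by (simp add: blin_diff[OF Yseq_blin])
  then have "(\<lambda>n. Yseq S (Suc n) x) \<longlonglongrightarrow> (1/2) *\<^sub>R (S x + Ylim S (Ylim S x))"
    by (auto intro!: tendsto_intros)
  moreover have "(\<lambda>n. Yseq S (Suc n) x) \<longlonglongrightarrow> Ylim S x"
    using Yseq_conv[of x] by (rule LIMSEQ_Suc)
  ultimately show ?thesis using LIMSEQ_unique by blast
qed

end

lemma sqrt_exists:
  fixes S :: "'a::complex_hilbert \<Rightarrow> 'a"
  assumes S: "blin S" "sa S" "pos S" "\<And>x. norm (S x) \<le> norm x"
  shows "\<exists>R. blin R \<and> sa R \<and> pos R \<and> (\<forall>x. R (R x) = x - S x)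
    \<and> (\<forall>X. blin X \<longrightarrow> (\<forall>x. X (S x) = S (X x)) \<longrightarrow> (\<forall>x. X (R x) = R (X x)))"
proof -
  define Y where "Y = Ylim S"
  define R where "R x = x - Y x" for x
  have BY: "blin Y" unfolding Y_def by (rule Ylim_blin[OF S])
  have "blin R" unfolding R_def by (rule blin_diff_op[OF blin_id BY])
  moreover have "sa R" unfolding R_def by (rule sa_diff[OF sa_id]) (simp add: Y_def Ylim_sa[OF S])
  moreover have "pos R"
  proof -
    have "0 \<le> Re (cinner (R x) x)" for x
    proof -
      have "Re (cinner (Y x) x) \<le> norm (Y x) * norm x" by (rule Re_cinner_le)
      also have "\<dots> \<le> norm x * norm x" unfolding Y_def by (rule mult_right_mono[OF Ylim_norm[OF S]]) simp
      finally show ?thesis by (simp add: R_def cinner_diff_left Re_cinner_self power2_eq_square)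
    qed
    then show ?thesis by (simp add: pos_def)
  qed
  moreover have "R (R x) = x - S x" for x
  proof -
    define w where "w = S x + Y (Y x)"
    have h: "Y x = (1/2) *\<^sub>R w" unfolding w_def Y_def by (rule Ylim_fix[OF S])
    have "2 *\<^sub>R Y x = w" by (subst h) simp
    then have fx: "2 *\<^sub>R Y x = S x + Y (Y x)" by (simp only: w_def)
    have "R (R x) = x - 2 *\<^sub>R Y x + Y (Y x)"
      by (simp add: R_def blin_diff[OF BY] scaleR_2 algebra_simps)
    then show ?thesis using fx by (simp add: algebra_simps)
  qed
  moreover have "X (R x) = R (X x)" if "blin X" "\<forall>x. X (S x) = S (X x)" for X x
    using Ylim_commute[OF S that(1)] that by (simp add: R_def Y_def blin_diff[OF that(1)])
  ultimately show ?thesis by blast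
qed

lemma closure_subspace_csub:
  fixes U :: "'a::complex_hilbert set"
  assumes "0 \<in> U" "\<And>x y. x \<in> U \<Longrightarrow> y \<in> U \<Longrightarrow> x + y \<in> U" "\<And>c x. x \<in> U \<Longrightarrow> scaleC c x \<in> U"
  shows "closed_csubspace (closure U)"
  unfolding closed_csubspace_def
proof (intro conjI ballI allI)
  show "closed (closure U)" by simp
  show "0 \<in> closure U" using assms(1) closure_subset by blast
next
  fix x y assume "x \<in> closure U" "y \<in> closure U"
  then obtain f g where f: "\<And>n. f n \<in> U" "f \<longlonglongrightarrow> x" and g: "\<And>n. g n \<in> U" "g \<longlonglongrightarrow> y"
    unfolding closure_sequential by metis
  have "(\<lambda>n. f n + g n) \<longlonglongrightarrow> x + y" by (intro tendsto_add f g)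
  moreover have "\<And>n. f n + g n \<in> U" using assms(2) f g by blast
  ultimately show "x + y \<in> closure U" unfolding closure_sequential
    by (intro exI[of _ "\<lambda>n. f n + g n"]) auto
next
  fix c x assume "x \<in> closure U"
  then obtain f where f: "\<And>n. f n \<in> U" "f \<longlonglongrightarrow> x"
    unfolding closure_sequential by metis
  have "(\<lambda>n. scaleC c (f n)) \<longlonglongrightarrow> scaleC c x" by (intro tendsto_scaleC f)
  moreover have "\<And>n. scaleC c (f n) \<in> U" using assms(3) f by blast
  ultimately show "scaleC c x \<in> closure U" unfolding closure_sequential
    by (intro exI[of _ "\<lambda>n. scaleC c (f n)"]) auto
qed

lemma blin_range_subspace:
  assumes T: "blin T"
  shows "closed_csubspace (closure (range T))"
proof (rule closure_subspace_csub)
  have "T 0 \<in> range T" by (rule rangeI)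
  then show "0 \<in> range T" using blin_zero[OF T] by simp
  show "x + y \<in> range T" if xy: "x \<in> range T" "y \<in> range T" for x y
  proof -
    obtain u v where "x = T u" "y = T v" using xy by blast
    then have "x + y = T (u + v)" by (simp add: blin_add[OF T])
    then show ?thesis by simp
  qed
  show "scaleC c x \<in> range T" if xr: "x \<in> range T" for c x
  proof -
    obtain u where "x = T u" using xr by blast
    then have "scaleC c x = T (scaleC c u)" by (simp add: blin_scaleC[OF T])
    then show ?thesis by simp
  qed
qed

lemma closed_Re_form:
  assumes C: "blin C"
  shows "closed {y. 0 \<le> Re (cinner (C y) y)}"
proof -
  have "isCont (\<lambda>y. Re (cinner (C y) y)) y" for y
    unfolding isCont_def
    by (intro tendsto_Re tendsto_cinner blin_tendsto[OF C] tendsto_ident_at)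
  then have "continuous_on UNIV (\<lambda>y. Re (cinner (C y) y))"
    by (simp add: continuous_at_imp_continuous_on)
  then show ?thesis using closed_Collect_le[of "\<lambda>y. 0" "\<lambda>y. Re (cinner (C y) y)"] by simp
qed

lemma sa_Re_self: assumes "sa A" shows "Re (cinner (A (A x)) x) = (norm (A x))^2"
proof -
  have "cinner (A (A x)) x = cinner (A x) (A x)" using assms unfolding sa_def by blast
  then show ?thesis by (simp add: Re_cinner_self)
qed

lemma spectral_split:
  fixes A :: "'a::complex_hilbert \<Rightarrow> 'a"
  assumes A: "blin A" "sa A" and eps: "\<epsilon> > 0"
  shows "\<exists>G. closed_csubspace G \<and> (\<forall>x\<in>G. (norm (A x))^2 \<le> \<epsilon> * (norm x)^2)
    \<and> (\<forall>x\<in>orth G. \<epsilon> * (norm x)^2 \<le> (norm (A x))^2)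
    \<and> (\<forall>X. blin X \<longrightarrow> (\<forall>x. X (A x) = A (X x)) \<longrightarrow> (\<forall>x\<in>G. X x \<in> G))"
proof -
  obtain c where c: "c > 0" "\<And>x. norm (A x) \<le> c * norm x" using blin_bound[OF A(1)] by blast
  define C where "C x = A (A x) - \<epsilon> *\<^sub>R x" for x
  have BC: "blin C" unfolding C_def
    by (rule blin_diff_op[OF blin_comp[OF A(1) A(1)] blin_scaleR_op[OF blin_id]])
  have SC: "sa C" unfolding C_def
    by (rule sa_diff[OF sa_comp_commute[OF A(2) A(2) refl] sa_scaleR[OF sa_id]])
  have Cb: "norm (C x) \<le> (c^2 + \<epsilon>) * norm x" for x
  proof -
    have "norm (A (A x)) \<le> c * (c * norm x)"
      using c(2)[of "A x"] c(2)[of x] c(1) by (meson mult_left_mono order_trans less_imp_le)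
    then have "norm (C x) \<le> c^2 * norm x + \<epsilon> * norm x"
      unfolding C_def using norm_triangle_ineq4[of "A (A x)" "\<epsilon> *\<^sub>R x"] eps
      by (simp add: power2_eq_square mult.assoc)
    then show ?thesis by (simp add: distrib_right)
  qed
  define k where "k = (c^2 + \<epsilon>)^2 + 1"
  have k: "k > 0" unfolding k_def using zero_le_power2[of "c^2 + \<epsilon>"] by linarith
  have Cb2: "(norm (C x))^2 \<le> k * (norm x)^2" for x
  proof -
    have "(norm (C x))^2 \<le> ((c^2 + \<epsilon>) * norm x)^2"
      using Cb[of x] by (simp add: power_mono)
    also have "\<dots> \<le> k * (norm x)^2" unfolding power_mult_distrib k_def
      by (rule mult_right_mono) simp_all
    finally show ?thesis .
  qed
  define S where "S x = x - (1/k) *\<^sub>R C (C x)" for x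
  have BS: "blin S" unfolding S_def
    by (rule blin_diff_op[OF blin_id blin_scaleR_op[OF blin_comp[OF BC BC]]])
  have SS: "sa S" unfolding S_def
    by (rule sa_diff[OF sa_id sa_scaleR[OF sa_comp_commute[OF SC SC refl]]])
  have CC: "Re (cinner (C (C x)) x) = (norm (C x))^2" for x by (rule sa_Re_self[OF SC])
  have PS: "pos S"
  proof -
    have "0 \<le> Re (cinner (S x) x)" for x
    proof -
      have "Re (cinner (S x) x) = (norm x)^2 - (1/k) * (norm (C x))^2"
        by (simp add: S_def cinner_diff_left cinner_scaleR_left Re_cinner_self CC)
      moreover have "(1/k) * (norm (C x))^2 \<le> (norm x)^2"
        using Cb2[of x] k by (simp add: field_simps)
      ultimately show ?thesis by simp
    qed
    then show ?thesis by (simp add: pos_def)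
  qed
  have NS: "norm (S x) \<le> norm x" for x
  proof -
    have "(norm (C (C x)) / k)^2 = (norm (C (C x)))^2 / k^2" by (simp add: power_divide)
    also have "\<dots> \<le> (k * (norm (C x))^2) / k^2" by (rule divide_right_mono[OF Cb2]) simp
    also have "\<dots> = (1/k) * (norm (C x))^2" using k by (simp add: power2_eq_square field_simps)
    finally have h: "(norm (C (C x)) / k)^2 \<le> (1/k) * (norm (C x))^2" .
    have "(norm (S x))^2 = (norm x)^2 + (norm (C (C x)) / k)^2 - 2 * ((1/k) * (norm (C x))^2)"
      using k by (simp add: S_def norm_diff_sq cinner_scaleR_right Re_cinner_commute[of x] CC)
    also have "\<dots> \<le> (norm x)^2"
    proof -
      have "0 \<le> (1/k) * (norm (C x))^2" using k by simp
      then show ?thesis using h by linarith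
    qed
    finally show ?thesis by (rule power2_le_imp_le) simp
  qed
  obtain R where R1: "blin R" and R2: "sa R" and R3: "pos R" and R4: "\<forall>x. R (R x) = x - S x"
    and R5: "\<forall>X. blin X \<longrightarrow> (\<forall>x. X (S x) = S (X x)) \<longrightarrow> (\<forall>x. X (R x) = R (X x))"
    using sqrt_exists[OF BS SS PS NS] by blast
  have R: "blin R" "sa R" "pos R" "\<And>x. R (R x) = x - S x"
    "\<And>X. blin X \<Longrightarrow> (\<forall>x. X (S x) = S (X x)) \<Longrightarrow> (\<forall>x. X (R x) = R (X x))"
    using R1 R2 R3 R4 R5 by simp_all
  define P where "P x = sqrt k *\<^sub>R R x" for x
  have BP: "blin P" unfolding P_def by (rule blin_scaleR_op[OF R(1)])
  have SP: "sa P" unfolding P_def by (rule sa_scaleR[OF R(2)])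
  have PP: "pos P" using R(3) k by (simp add: pos_def P_def cinner_scaleR_left)
  have PPC: "P (P x) = C (C x)" for x
    using R(4)[of x] k by (simp add: P_def blin_scaleR[OF R(1)] S_def)
  have comS: "X (S x) = S (X x)" if X: "blin X" "\<And>x. X (C x) = C (X x)" for X x
    by (simp add: S_def blin_diff[OF X(1)] blin_scaleR[OF X(1)] X(2))
  have comP: "X (P x) = P (X x)" if X: "blin X" "\<And>x. X (C x) = C (X x)" for X x
    using R(5)[OF X(1)] comS[OF X] by (simp add: P_def blin_scaleR[OF X(1)])
  have comAC: "X (C x) = C (X x)" if X: "blin X" "\<And>x. X (A x) = A (X x)" for X x
    by (simp add: C_def blin_diff[OF X(1)] blin_scaleR[OF X(1)] X(2))
  have PC: "P (C x) = C (P x)" for x by (rule comP[OF BC, symmetric]) simp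
  define G where "G = {x. P x + C x = 0}"
  have BPC: "blin (\<lambda>x. P x + C x)" by (rule blin_plus[OF BP BC])
  have SPC: "sa (\<lambda>x. P x + C x)" by (rule sa_plus[OF SP SC])
  have G: "closed_csubspace G" unfolding G_def by (rule csub_kernel[OF BPC])
  have ReC: "Re (cinner (C x) x) = (norm (A x))^2 - \<epsilon> * (norm x)^2" for x
    by (simp add: C_def cinner_diff_left cinner_scaleR_left sa_Re_self[OF A(2)] Re_cinner_self)
  have small: "(norm (A x))^2 \<le> \<epsilon> * (norm x)^2" if "x \<in> G" for x
  proof -
    have "C x = - P x" using that by (simp add: G_def eq_neg_iff_add_eq_0 add.commute)
    then have "Re (cinner (C x) x) = - Re (cinner (P x) x)" by (simp add: cinner_minus_left)
    then have "Re (cinner (C x) x) \<le> 0" using PP by (simp add: pos_def)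
    then show ?thesis using ReC[of x] by simp
  qed
  have large: "\<epsilon> * (norm x)^2 \<le> (norm (A x))^2" if x: "x \<in> orth G" for x
  proof -
    define M where "M = closure (range (\<lambda>x. P x + C x))"
    have M: "closed_csubspace M" unfolding M_def by (rule blin_range_subspace[OF BPC])
    have MG: "M \<subseteq> orth G"
    proof -
      have "range (\<lambda>x. P x + C x) \<subseteq> orth G"
      proof
        fix y assume "y \<in> range (\<lambda>x. P x + C x)"
        then obtain z where z: "y = P z + C z" by blast
        have "cinner y g = 0" if "g \<in> G" for g
        proof -
          have "cinner y g = cinner z (P g + C g)" using SPC unfolding z sa_def by blast
          also have "\<dots> = 0" using that by (simp add: G_def)
          finally show ?thesis .
        qed
        then show "y \<in> orth G" by (simp add: orth_iff')
      qed
      then show ?thesis unfolding M_def using closed_orth closure_minimal by blast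
    qed
    define q where "q = x - proj M x"
    have qM: "q \<in> orth M" unfolding q_def by (rule proj_props(2)[OF M])
    have z0: "cinner z (P q + C q) = 0" for z
    proof -
      have "P z + C z \<in> range (\<lambda>x. P x + C x)" by (rule rangeI)
      then have "P z + C z \<in> M" unfolding M_def by (rule subsetD[OF closure_subset])
      then have "cinner (P z + C z) q = 0" using qM by (simp add: orth_iff)
      moreover have "cinner (P z + C z) q = cinner z (P q + C q)"
        using SPC[unfolded sa_def, rule_format, of z q] by simp
      ultimately show ?thesis by simp
    qed
    have "cinner (P q + C q) (P q + C q) = 0" by (rule z0)
    then have "P q + C q = 0" by (rule iffD1[OF cinner_self_eq_0])
    then have qG: "q \<in> G" by (simp add: G_def)
    have "q \<in> orth G" unfolding q_def
      by (rule csub_diff[OF csub_orth x]) (use MG proj_props(1)[OF M] in blast)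
    then have "q = 0" using qG orth_inter_zero by blast
    then have h: "x = proj M x" using right_minus_eq[of x "proj M x"] unfolding q_def by blast
    have xM: "x \<in> M" using proj_props(1)[OF M, of x] h[symmetric] by simp
    have "range (\<lambda>x. P x + C x) \<subseteq> {y. 0 \<le> Re (cinner (C y) y)}"
    proof
      fix y assume "y \<in> range (\<lambda>x. P x + C x)"
      then obtain z where z: "y = P z + C z" by blast
      have "C y = P y"
        using PPC[of z] PC[of z] by (simp add: z blin_add[OF BC] blin_add[OF BP])
      then show "y \<in> {y. 0 \<le> Re (cinner (C y) y)}" using PP by (simp add: pos_def)
    qed
    then have "M \<subseteq> {y. 0 \<le> Re (cinner (C y) y)}"
      unfolding M_def by (rule closure_minimal[OF _ closed_Re_form[OF BC]])
    then show ?thesis using xM ReC[of x] by auto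
  qed
  have inv: "\<forall>x\<in>G. X x \<in> G" if X: "blin X" "\<forall>x. X (A x) = A (X x)" for X
  proof
    fix x assume "x \<in> G"
    have XC: "\<And>x. X (C x) = C (X x)" using comAC[OF X(1)] X(2) by blast
    have "P (X x) + C (X x) = X (P x + C x)"
      by (simp add: blin_add[OF X(1)] comP[OF X(1) XC] XC)
    then show "X x \<in> G" using \<open>x \<in> G\<close> by (simp add: G_def blin_zero[OF X(1)])
  qed
  show ?thesis using G small large inv by blast
qed

lemma cspan_zero: "0 \<in> cspan S"
  unfolding cspan_def by (rule CollectI, rule exI[of _ "{}"]) auto

lemma cspan_base: "v \<in> S \<Longrightarrow> v \<in> cspan S"
  unfolding cspan_def
  by (rule CollectI, rule exI[of _ "{v}"], rule exI[of _ "\<lambda>_. 1"]) (simp add: scaleC_one)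

lemma cspanI: assumes "finite F" "F \<subseteq> S" shows "(\<Sum>v\<in>F. scaleC (c v) v) \<in> cspan S"
  unfolding cspan_def by (rule CollectI, rule exI[of _ F], rule exI[of _ c]) (simp add: assms)

lemma cinner_zero_sym: "cinner x y = 0 \<longleftrightarrow> cinner y (x::'a::complex_hilbert) = 0"
  using cinner_commute[of x y] by simp

lemma cspanE:
  assumes "x \<in> cspan S"
  obtains F c where "finite F" "F \<subseteq> S" "x = (\<Sum>v\<in>F. scaleC (c v) v)"
proof -
  have "\<exists>F c. x = (\<Sum>v\<in>F. scaleC (c v) v) \<and> finite F \<and> F \<subseteq> S"
    using assms unfolding cspan_def mem_Collect_eq .
  then show ?thesis using that by blast
qed

lemma sum_if_restrict:
  assumes "finite A" "B \<subseteq> A"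
  shows "(\<Sum>v\<in>A. (if v \<in> B then f v else 0)) = (\<Sum>v\<in>B. f v)"
proof -
  have "A \<inter> B = B" using assms(2) by blast
  then show ?thesis using sum.inter_restrict[OF assms(1), of f B] by simp
qed

lemma cspan_add:
  assumes "x \<in> cspan S" "y \<in> cspan S"
  shows "x + y \<in> cspan S"
proof -
  obtain F c where F: "finite F" "F \<subseteq> S" "x = (\<Sum>v\<in>F. scaleC (c v) v)"
    using assms(1) by (rule cspanE)
  obtain G d where G: "finite G" "G \<subseteq> S" "y = (\<Sum>v\<in>G. scaleC (d v) v)"
    using assms(2) by (rule cspanE)
  define e where "e v = (if v \<in> F then c v else 0) + (if v \<in> G then d v else 0)" for v
  have pw: "scaleC (e v) v = (if v \<in> F then scaleC (c v) v else 0) + (if v \<in> G then scaleC (d v) v else 0)" for v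
    by (simp add: e_def scaleC_add_left)
  have "(\<Sum>v\<in>F \<union> G. scaleC (e v) v)
      = (\<Sum>v\<in>F \<union> G. (if v \<in> F then scaleC (c v) v else 0)) + (\<Sum>v\<in>F \<union> G. (if v \<in> G then scaleC (d v) v else 0))"
    unfolding pw by (rule sum.distrib)
  also have "(\<Sum>v\<in>F \<union> G. (if v \<in> F then scaleC (c v) v else 0)) = (\<Sum>v\<in>F. scaleC (c v) v)"
    by (rule sum_if_restrict) (use F(1) G(1) in auto)
  also have "(\<Sum>v\<in>F \<union> G. (if v \<in> G then scaleC (d v) v else 0)) = (\<Sum>v\<in>G. scaleC (d v) v)"
    by (rule sum_if_restrict) (use F(1) G(1) in auto)
  finally have "x + y = (\<Sum>v\<in>F \<union> G. scaleC (e v) v)" using F(3) G(3) by simp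
  moreover have "(\<Sum>v\<in>F \<union> G. scaleC (e v) v) \<in> cspan S" by (rule cspanI) (use F G in auto)
  ultimately show ?thesis by simp
qed

lemma cspan_scaleC:
  assumes "x \<in> cspan S"
  shows "scaleC a x \<in> cspan S"
proof -
  obtain F c where F: "finite F" "F \<subseteq> S" "x = (\<Sum>v\<in>F. scaleC (c v) v)"
    using assms(1) by (rule cspanE)
  have "scaleC a x = (\<Sum>v\<in>F. scaleC (a * c v) v)"
    by (simp add: F(3) scaleC_sum_right scaleC_scaleC)
  moreover have "(\<Sum>v\<in>F. scaleC (a * c v) v) \<in> cspan S" by (rule cspanI[OF F(1,2)])
  ultimately show ?thesis by simp
qed

lemma cspan_sub:
  assumes W: "closed_csubspace W" and S: "S \<subseteq> W"
  shows "cspan S \<subseteq> W"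
proof
  fix x assume "x \<in> cspan S"
  then obtain F c where F: "finite F" "F \<subseteq> S" "x = (\<Sum>v\<in>F. scaleC (c v) v)"
    by (rule cspanE)
  have "(\<Sum>v\<in>F. scaleC (c v) v) \<in> W"
    by (rule csub_sum[OF W]) (use F(2) S csub_scaleC[OF W] in blast)
  then show "x \<in> W" using F(3) by simp
qed

lemma csub_ccspan: "closed_csubspace (closure (cspan S))"
  by (rule closure_subspace_csub[OF cspan_zero cspan_add cspan_scaleC])

lemma ccspan_sub:
  assumes W: "closed_csubspace W" and S: "S \<subseteq> W"
  shows "closure (cspan S) \<subseteq> W"
  by (rule closure_minimal[OF cspan_sub[OF W S] csub_closed[OF W]])

lemma ccspan_base: "S \<subseteq> closure (cspan S)"
  using cspan_base closure_subset by blast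

lemma ccspan_mono: "S \<subseteq> T \<Longrightarrow> closure (cspan S) \<subseteq> closure (cspan T)"
  by (rule ccspan_sub[OF csub_ccspan]) (use ccspan_base in blast)

lemma csub_vimage:
  assumes A: "blin A" and W: "closed_csubspace W"
  shows "closed_csubspace {x. A x \<in> W}"
  unfolding closed_csubspace_def
proof (intro conjI ballI allI)
  show "closed {x. A x \<in> W}"
    using closed_vimage[OF csub_closed[OF W], of A] blin_continuous_on[OF A, of UNIV]
    by (simp add: vimage_def continuous_on_closed_vimage)
  show "0 \<in> {x. A x \<in> W}" using csub_zero[OF W] by (simp add: blin_zero[OF A])
  show "x + y \<in> {x. A x \<in> W}" if "x \<in> {x. A x \<in> W}" "y \<in> {x. A x \<in> W}" for x y
    using that csub_add[OF W] by (simp add: blin_add[OF A])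
  show "scaleC c x \<in> {x. A x \<in> W}" if "x \<in> {x. A x \<in> W}" for c x
    using that csub_scaleC[OF W] by (simp add: blin_scaleC[OF A])
qed

lemma ccspan_invariant:
  assumes A: "blin A" and inv: "\<And>x. x \<in> S \<Longrightarrow> A x \<in> S"
  shows "x \<in> closure (cspan S) \<Longrightarrow> A x \<in> closure (cspan S)"
proof -
  assume x: "x \<in> closure (cspan S)"
  have "S \<subseteq> {x. A x \<in> closure (cspan S)}" using inv ccspan_base by blast
  then have "closure (cspan S) \<subseteq> {x. A x \<in> closure (cspan S)}"
    by (rule ccspan_sub[OF csub_vimage[OF A csub_ccspan]])
  then show ?thesis using x by blast
qed

lemma orth_sym: "T \<subseteq> orth V \<longleftrightarrow> V \<subseteq> orth T"
  unfolding orth_iff subset_iff using cinner_zero_sym by blast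

lemma orth_invariant:
  assumes "sa A" "\<And>x. x \<in> U \<Longrightarrow> A x \<in> U" "x \<in> orth U"
  shows "A x \<in> orth U"
proof -
  have "cinner u (A x) = 0" if "u \<in> U" for u
  proof -
    have "cinner u (A x) = cinner (A u) x" using assms(1) by (simp add: sa_def)
    also have "\<dots> = 0" using assms(2)[OF that] assms(3) by (simp add: orth_iff)
    finally show ?thesis .
  qed
  then show ?thesis by (simp add: orth_iff)
qed

lemma proj_blin: "closed_csubspace K \<Longrightarrow> blin (proj K)"
  unfolding blin_def using proj_add proj_scaleC proj_norm_le by (metis mult_1)

lemma proj_commute:
  assumes A: "blin A" "sa A" and K: "closed_csubspace K" and inv: "\<And>x. x \<in> K \<Longrightarrow> A x \<in> K"
  shows "proj K (A x) = A (proj K x)"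
proof (rule proj_eqI[OF K])
  show "A (proj K x) \<in> K" by (rule inv[OF proj_props(1)[OF K]])
  have "A x - A (proj K x) = A (x - proj K x)" by (simp add: blin_diff[OF A(1)])
  also have "\<dots> \<in> orth K" by (rule orth_invariant[OF A(2) inv proj_props(2)[OF K]])
  finally show "A x - A (proj K x) \<in> orth K" .
qed

lemma bounded_below_invertible:
  fixes A :: "'a::complex_hilbert \<Rightarrow> 'a"
  assumes A: "blin A" "sa A" and d: "d > 0" "\<And>x. d * norm x \<le> norm (A x)"
  shows "invertible_on UNIV A"
proof -
  have injA: "x = y" if "A x = A y" for x y
  proof -
    have "d * norm (x - y) \<le> norm (A (x - y))" by (rule d(2))
    also have "\<dots> = 0" using that by (simp add: blin_diff[OF A(1)])
    finally show ?thesis using d(1) by (simp add: mult_le_0_iff)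
  qed
  have closedR: "closed (range A)"
    unfolding closed_sequential_limits
  proof (intro allI impI, elim conjE)
    fix f y assume f: "\<forall>n. f n \<in> range A" "f \<longlonglongrightarrow> y"
    have "\<forall>n. \<exists>x. f n = A x" using f(1) by blast
    then have "\<exists>g. \<forall>n. f n = A (g n)" by (rule choice)
    then obtain g where g: "\<And>n. f n = A (g n)" by blast
    have "Cauchy g"
    proof (rule metric_CauchyI)
      fix e :: real assume e: "e > 0"
      have "Cauchy f" using f(2) by (rule LIMSEQ_imp_Cauchy)
      then obtain N where N: "\<And>m n. m \<ge> N \<Longrightarrow> n \<ge> N \<Longrightarrow> dist (f m) (f n) < d * e"
        using metric_CauchyD[of f "d * e"] d(1) e by auto
      have "dist (g m) (g n) < e" if "m \<ge> N" "n \<ge> N" for m n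
      proof -
        have "d * norm (g m - g n) \<le> norm (A (g m - g n))" by (rule d(2))
        also have "\<dots> = dist (f m) (f n)" by (simp add: g dist_norm blin_diff[OF A(1)])
        also have "\<dots> < d * e" by (rule N[OF that])
        finally show ?thesis using d(1) by (simp add: dist_norm)
      qed
      then show "\<exists>M. \<forall>m\<ge>M. \<forall>n\<ge>M. dist (g m) (g n) < e" by blast
    qed
    then obtain x where "g \<longlonglongrightarrow> x" using Cauchy_convergent_iff convergent_def by blast
    then have "(\<lambda>n. A (g n)) \<longlonglongrightarrow> A x" by (rule blin_tendsto[OF A(1)])
    then have "f \<longlonglongrightarrow> A x" by (simp add: g[symmetric])
    then have "y = A x" using f(2) LIMSEQ_unique by blast
    then show "y \<in> range A" by simp
  qed
  have surjA: "y \<in> range A" for y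
  proof -
    define M where "M = closure (range A)"
    have M: "closed_csubspace M" unfolding M_def by (rule blin_range_subspace[OF A(1)])
    have MR: "M = range A" unfolding M_def using closedR by simp
    define q where "q = y - proj M y"
    have qM: "q \<in> orth M" unfolding q_def by (rule proj_props(2)[OF M])
    have "cinner w (A q) = 0" for w
    proof -
      have "A w \<in> M" unfolding MR by (rule rangeI)
      then have "cinner (A w) q = 0" using qM by (simp add: orth_iff)
      then show ?thesis using A(2) by (simp add: sa_def)
    qed
    then have "A q = 0" by (metis cinner_self_eq_0)
    then have "q = 0" using injA[of q 0] blin_zero[OF A(1)] by simp
    then have h: "y = proj M y" using right_minus_eq[of y "proj M y"] unfolding q_def by blast
    have "proj M y \<in> M" by (rule proj_props(1)[OF M])
    then show ?thesis using h[symmetric] MR by simp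
  qed
  define B where "B y = (SOME x. A x = y)" for y
  have AB: "A (B y) = y" for y unfolding B_def using surjA[of y] by (metis (mono_tags) rangeE someI_ex)
  have BA: "B (A x) = x" for x using AB[of "A x"] injA by blast
  have "blin B"
    unfolding blin_def
  proof (intro conjI allI)
    show "B (x + y) = B x + B y" for x y
      by (rule injA) (simp add: AB blin_add[OF A(1)])
    show "B (scaleC c x) = scaleC c (B x)" for c x
      by (rule injA) (simp add: AB blin_scaleC[OF A(1)])
    have "norm (B y) \<le> (1/d) * norm y" for y
      using d(2)[of "B y"] d(1) by (simp add: AB field_simps)
    then show "\<exists>C. \<forall>x. norm (B x) \<le> C * norm x" by blast
  qed
  then show ?thesis unfolding invertible_on_def blin_iff[symmetric] using AB BA by blast
qed

definition Gs :: "('a::complex_hilbert \<Rightarrow> 'a) \<Rightarrow> real \<Rightarrow> 'a set" where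
  "Gs A \<epsilon> = (SOME G. closed_csubspace G \<and> (\<forall>x\<in>G. (norm (A x))^2 \<le> \<epsilon> * (norm x)^2)
    \<and> (\<forall>x\<in>orth G. \<epsilon> * (norm x)^2 \<le> (norm (A x))^2)
    \<and> (\<forall>X. blin X \<longrightarrow> (\<forall>x. X (A x) = A (X x)) \<longrightarrow> (\<forall>x\<in>G. X x \<in> G)))"

lemma Gs_all:
  assumes A: "blin A" "sa A" and e: "\<epsilon> > 0"
  shows "closed_csubspace (Gs A \<epsilon>) \<and> (\<forall>x\<in>Gs A \<epsilon>. (norm (A x))^2 \<le> \<epsilon> * (norm x)^2)
    \<and> (\<forall>x\<in>orth (Gs A \<epsilon>). \<epsilon> * (norm x)^2 \<le> (norm (A x))^2)
    \<and> (\<forall>X. blin X \<longrightarrow> (\<forall>x. X (A x) = A (X x)) \<longrightarrow> (\<forall>x\<in>Gs A \<epsilon>. X x \<in> Gs A \<epsilon>))"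
  unfolding Gs_def by (rule someI_ex[OF spectral_split[OF A e]])

context
  fixes A :: "'a::complex_hilbert \<Rightarrow> 'a"
  assumes A: "blin A" "sa A"
begin

lemma Gs_csub: "\<epsilon> > 0 \<Longrightarrow> closed_csubspace (Gs A \<epsilon>)"
  using Gs_all[OF A] by blast

lemma Gs_small: "\<epsilon> > 0 \<Longrightarrow> x \<in> Gs A \<epsilon> \<Longrightarrow> (norm (A x))^2 \<le> \<epsilon> * (norm x)^2"
  using Gs_all[OF A] by blast

lemma Gs_large: "\<epsilon> > 0 \<Longrightarrow> x \<in> orth (Gs A \<epsilon>) \<Longrightarrow> \<epsilon> * (norm x)^2 \<le> (norm (A x))^2"
  using Gs_all[OF A] by blast

lemma Gs_comm: "\<epsilon> > 0 \<Longrightarrow> blin X \<Longrightarrow> (\<And>x. X (A x) = A (X x)) \<Longrightarrow> x \<in> Gs A \<epsilon> \<Longrightarrow> X x \<in> Gs A \<epsilon>"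
proof -
  assume "\<epsilon> > 0" "blin X" "\<And>x. X (A x) = A (X x)" "x \<in> Gs A \<epsilon>"
  moreover have "\<forall>X. blin X \<longrightarrow> (\<forall>x. X (A x) = A (X x)) \<longrightarrow> (\<forall>x\<in>Gs A \<epsilon>. X x \<in> Gs A \<epsilon>)"
    using Gs_all[OF A \<open>\<epsilon> > 0\<close>] by blast
  ultimately show ?thesis by blast
qed

lemma Gs_inv: "\<epsilon> > 0 \<Longrightarrow> x \<in> Gs A \<epsilon> \<Longrightarrow> A x \<in> Gs A \<epsilon>"
  by (rule Gs_comm[OF _ A(1)]) auto

lemma Gs_proj_pres:
  assumes e: "\<epsilon> > 0" "\<epsilon>' > 0" and x: "x \<in> Gs A \<epsilon>"
  shows "proj (Gs A \<epsilon>') x \<in> Gs A \<epsilon>"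
proof (rule Gs_comm[OF e(1) proj_blin[OF Gs_csub[OF e(2)]] _ x])
  fix y show "proj (Gs A \<epsilon>') (A y) = A (proj (Gs A \<epsilon>') y)"
    by (rule proj_commute[OF A Gs_csub[OF e(2)] Gs_inv[OF e(2)]])
qed

lemma Gs_mono:
  assumes e: "0 < \<epsilon>" "\<epsilon> < \<epsilon>'" and x: "x \<in> Gs A \<epsilon>"
  shows "x \<in> Gs A \<epsilon>'"
proof -
  have e': "\<epsilon>' > 0" using e by simp
  define v where "v = x - proj (Gs A \<epsilon>') x"
  have vG: "v \<in> Gs A \<epsilon>" unfolding v_def
    by (rule csub_diff[OF Gs_csub[OF e(1)] x Gs_proj_pres[OF e(1) e' x]])
  have vO: "v \<in> orth (Gs A \<epsilon>')" unfolding v_def by (rule proj_props(2)[OF Gs_csub[OF e']])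
  have "\<epsilon>' * (norm v)^2 \<le> \<epsilon> * (norm v)^2"
    using Gs_small[OF e(1) vG] Gs_large[OF e' vO] by linarith
  then have "(\<epsilon>' - \<epsilon>) * (norm v)^2 \<le> 0" by (simp add: algebra_simps)
  then have "(norm v)^2 \<le> 0" using e(2) by (simp add: mult_le_0_iff)
  then have "v = 0" by simp
  then have h: "x = proj (Gs A \<epsilon>') x" using right_minus_eq[of x "proj (Gs A \<epsilon>') x"] unfolding v_def by blast
  have "proj (Gs A \<epsilon>') x \<in> Gs A \<epsilon>'" by (rule proj_props(1)[OF Gs_csub[OF e']])
  then show ?thesis using h[symmetric] by simp
qed

lemma Gs_nonzero:
  assumes ninv: "\<not> invertible_on UNIV A" and e: "\<epsilon> > 0"
  shows "\<exists>x\<in>Gs A \<epsilon>. x \<noteq> 0"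
proof (rule ccontr)
  assume "\<not> (\<exists>x\<in>Gs A \<epsilon>. x \<noteq> 0)"
  then have z: "\<And>y. y \<in> Gs A \<epsilon> \<Longrightarrow> y = 0" by blast
  have "sqrt \<epsilon> * norm x \<le> norm (A x)" for x
  proof -
    have "x \<in> orth (Gs A \<epsilon>)" unfolding orth_iff
    proof
      fix y assume "y \<in> Gs A \<epsilon>"
      then have "y = 0" by (rule z)
      then show "cinner y x = 0" by simp
    qed
    then have "\<epsilon> * (norm x)^2 \<le> (norm (A x))^2" by (rule Gs_large[OF e])
    then have "sqrt (\<epsilon> * (norm x)^2) \<le> sqrt ((norm (A x))^2)" by (rule real_sqrt_le_mono)
    then show ?thesis using e by (simp add: real_sqrt_mult)
  qed
  then have "invertible_on UNIV A"
    by (intro bounded_below_invertible[OF A, of "sqrt \<epsilon>"]) (use e in auto)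
  then show False using ninv by blast
qed

end

context
  fixes A :: "'a::complex_hilbert \<Rightarrow> 'a"
  assumes A: "blin A" "sa A" and injA: "inj A" and ninv: "\<not> invertible_on UNIV A"
begin

lemma Gs_next:
  assumes e: "\<epsilon> > 0"
  shows "\<exists>\<epsilon>'. 0 < \<epsilon>' \<and> \<epsilon>' \<le> \<epsilon> / 2 \<and> (\<exists>y. y \<noteq> 0 \<and> y \<in> Gs A \<epsilon> \<and> y \<in> orth (Gs A \<epsilon>'))"
proof -
  obtain x where x: "x \<in> Gs A \<epsilon>" "x \<noteq> 0" using Gs_nonzero[OF A ninv e] by blast
  have "A x \<noteq> 0"
  proof
    assume "A x = 0"
    then have "A x = A 0" using blin_zero[OF A(1)] by simp
    then show False using injA x(2) by (simp add: inj_eq)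
  qed
  then have Ax: "(norm (A x))^2 > 0" by simp
  have nx: "(norm x)^2 > 0" using x(2) by simp
  define r where "r = (norm (A x))^2 / (norm x)^2"
  have r: "r > 0" using Ax nx by (simp add: r_def)
  define e' where "e' = min (\<epsilon> / 2) (r / 2)"
  have e': "e' > 0" "e' \<le> \<epsilon> / 2" "e' \<le> r / 2" using e r by (auto simp: e'_def)
  define y where "y = x - proj (Gs A e') x"
  have yO: "y \<in> orth (Gs A e')" unfolding y_def by (rule proj_props(2)[OF Gs_csub[OF A e'(1)]])
  have yG: "y \<in> Gs A \<epsilon>" unfolding y_def
    by (rule csub_diff[OF Gs_csub[OF A e] x(1) Gs_proj_pres[OF A e e'(1) x(1)]])
  have "y \<noteq> 0"
  proof
    assume "y = 0"
    then have h: "x = proj (Gs A e') x" using right_minus_eq[of x "proj (Gs A e') x"] unfolding y_def by blast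
    have "proj (Gs A e') x \<in> Gs A e'" by (rule proj_props(1)[OF Gs_csub[OF A e'(1)]])
    then have "x \<in> Gs A e'" using h[symmetric] by simp
    then have "(norm (A x))^2 \<le> e' * (norm x)^2" by (rule Gs_small[OF A e'(1)])
    also have "\<dots> \<le> (r / 2) * (norm x)^2" by (rule mult_right_mono[OF e'(3)]) simp
    also have "\<dots> = (norm (A x))^2 / 2" using nx by (simp add: r_def)
    finally show False using Ax by simp
  qed
  then show ?thesis using e' yO yG by blast
qed

definition nxt :: "real \<Rightarrow> real" where
  "nxt \<epsilon> = (SOME \<epsilon>'. 0 < \<epsilon>' \<and> \<epsilon>' \<le> \<epsilon> / 2 \<and> (\<exists>y. y \<noteq> 0 \<and> y \<in> Gs A \<epsilon> \<and> y \<in> orth (Gs A \<epsilon>')))"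

primrec epsq :: "nat \<Rightarrow> real" where
  "epsq 0 = 1"
| "epsq (Suc n) = nxt (epsq n)"

lemma epsq_pos: "epsq n > 0"
proof (induction n)
  case 0 then show ?case by simp
next
  case (Suc n)
  have "0 < nxt (epsq n) \<and> nxt (epsq n) \<le> epsq n / 2
      \<and> (\<exists>y. y \<noteq> 0 \<and> y \<in> Gs A (epsq n) \<and> y \<in> orth (Gs A (nxt (epsq n))))"
    unfolding nxt_def by (rule someI_ex[OF Gs_next[OF Suc]])
  then show ?case by simp
qed

lemma epsq_step: "epsq (Suc n) \<le> epsq n / 2 \<and>
  (\<exists>y. y \<noteq> 0 \<and> y \<in> Gs A (epsq n) \<and> y \<in> orth (Gs A (epsq (Suc n))))"
proof -
  have "0 < nxt (epsq n) \<and> nxt (epsq n) \<le> epsq n / 2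
      \<and> (\<exists>y. y \<noteq> 0 \<and> y \<in> Gs A (epsq n) \<and> y \<in> orth (Gs A (nxt (epsq n))))"
    unfolding nxt_def by (rule someI_ex[OF Gs_next[OF epsq_pos]])
  then show ?thesis by simp
qed

lemma epsq_le_pow: "epsq n \<le> (1/2)^n"
proof (induction n)
  case 0 then show ?case by simp
next
  case (Suc n)
  have "epsq (Suc n) \<le> epsq n / 2" using epsq_step by blast
  also have "\<dots> \<le> (1/2)^n / 2" using Suc by simp
  finally show ?case by simp
qed

lemma epsq_less: "n < m \<Longrightarrow> epsq m < epsq n"
proof (induction m)
  case 0 then show ?case by simp
next
  case (Suc m)
  have "epsq (Suc m) < epsq m" using epsq_step[of m] epsq_pos[of m] by linarith
  then show ?case using Suc by (cases "n = m") auto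
qed

definition Dsp :: "nat \<Rightarrow> 'a set" where
  "Dsp n = Gs A (epsq n) \<inter> orth (Gs A (epsq (Suc n)))"

lemma Dsp_csub: "closed_csubspace (Dsp n)"
proof -
  have G1: "closed_csubspace (Gs A (epsq n))" by (rule Gs_csub[OF A epsq_pos])
  have G2: "closed_csubspace (orth (Gs A (epsq (Suc n))))" by (rule csub_orth)
  show ?thesis unfolding Dsp_def closed_csubspace_def
    using G1 G2 unfolding closed_csubspace_def by (auto intro: closed_Int)
qed

lemma Dsp_inv: "x \<in> Dsp n \<Longrightarrow> A x \<in> Dsp n"
  unfolding Dsp_def
  using Gs_inv[OF A epsq_pos] orth_invariant[OF A(2) Gs_inv[OF A epsq_pos]] by blast

lemma Dsp_small: "x \<in> Dsp n \<Longrightarrow> (norm (A x))^2 \<le> epsq n * (norm x)^2"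
  unfolding Dsp_def using Gs_small[OF A epsq_pos] by blast

lemma Dsp_nonzero: "\<exists>y\<in>Dsp n. y \<noteq> 0"
  using epsq_step[of n] unfolding Dsp_def by blast

lemma Dsp_orth_lt:
  assumes "n < m" "u \<in> Dsp n" "v \<in> Dsp m"
  shows "cinner v u = 0"
proof -
  have vG: "v \<in> Gs A (epsq m)" using assms(3) by (simp add: Dsp_def)
  have "v \<in> Gs A (epsq (Suc n))"
  proof (cases "m = Suc n")
    case True then show ?thesis using vG by simp
  next
    case False
    then have "Suc n < m" using assms(1) by simp
    then have "epsq m < epsq (Suc n)" by (rule epsq_less)
    then show ?thesis by (rule Gs_mono[OF A epsq_pos _ vG])
  qed
  moreover have "u \<in> orth (Gs A (epsq (Suc n)))" using assms(2) by (simp add: Dsp_def)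
  ultimately show ?thesis by (simp add: orth_iff)
qed

lemma Dsp_orth:
  assumes "n \<noteq> m" "u \<in> Dsp n" "v \<in> Dsp m"
  shows "cinner u v = 0"
proof (cases "n < m")
  case True
  then show ?thesis using Dsp_orth_lt[OF True assms(2,3)] cinner_zero_sym by blast
next
  case False
  then have "m < n" using assms(1) by simp
  then show ?thesis using Dsp_orth_lt[OF _ assms(3,2)] by blast
qed

end

lemma noninv:
  fixes A :: "'a::complex_hilbert \<Rightarrow> 'a"
  assumes small: "\<And>\<delta>. \<delta> > 0 \<Longrightarrow> \<exists>x\<in>K. x \<noteq> 0 \<and> (norm (A x))^2 \<le> \<delta> * (norm x)^2"
    and inv: "\<And>x. x \<in> K \<Longrightarrow> A x \<in> K"
  shows "\<not> invertible_on K A"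
proof
  assume "invertible_on K A"
  then obtain B where B: "bounded_clinear_on K B" "\<forall>x\<in>K. B (A x) = x"
    unfolding invertible_on_def by blast
  obtain C where C: "\<forall>x\<in>K. norm (B x) \<le> C * norm x"
    using B(1) unfolding bounded_clinear_on_def by blast
  define \<delta> where "\<delta> = 1 / (C^2 + 1)"
  have cp: "C^2 + 1 > 0" using zero_le_power2[of C] by linarith
  have d: "\<delta> > 0" unfolding \<delta>_def using cp by simp
  obtain x where x: "x \<in> K" "x \<noteq> 0" "(norm (A x))^2 \<le> \<delta> * (norm x)^2" using small[OF d] by blast
  have "norm x = norm (B (A x))" using B(2) x(1) by simp
  also have "\<dots> \<le> C * norm (A x)" using C inv[OF x(1)] by blast
  also have "\<dots> \<le> \<bar>C\<bar> * norm (A x)" by (simp add: mult_right_mono)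
  finally have h: "norm x \<le> \<bar>C\<bar> * norm (A x)" .
  have "(norm x)^2 \<le> (\<bar>C\<bar> * norm (A x))^2" by (rule power_mono[OF h]) simp
  also have "\<dots> = C^2 * (norm (A x))^2" by (simp add: power_mult_distrib)
  also have "\<dots> \<le> C^2 * (\<delta> * (norm x)^2)" by (rule mult_left_mono[OF x(3)]) simp
  also have "\<dots> = (C^2 / (C^2 + 1)) * (norm x)^2" by (simp add: \<delta>_def)
  also have "\<dots> < 1 * (norm x)^2"
  proof (rule mult_strict_right_mono)
    show "C^2 / (C^2 + 1) < 1" using cp by (simp add: divide_less_eq_1_pos)
    show "0 < (norm x)^2" using x(2) by simp
  qed
  finally show False by simp
qed

lemma csub_zero_space: "closed_csubspace {0::'a::complex_hilbert}"
  unfolding closed_csubspace_def by simp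

context
  fixes A :: "'a::complex_hilbert \<Rightarrow> 'a"
  assumes A: "blin A" "sa A" and injA: "inj A" and ninv: "\<not> invertible_on UNIV A"
begin

lemma assemble:
  fixes I :: "nat set" and \<pi> :: "nat \<Rightarrow> nat"
  assumes I0: "0 \<in> I" and \<pi>I: "\<And>n. \<pi> n \<in> I" and inf: "\<And>j N. j \<in> I \<Longrightarrow> \<exists>n\<ge>N. \<pi> n = j"
  shows "\<exists>K :: nat \<Rightarrow> 'a set. orthogonal_sum K I
    \<and> (\<forall>j\<in>I. closed_csubspace (K j) \<and> A ` K j \<subseteq> K j
          \<and> self_adjoint_on (K j) A \<and> inj_on A (K j) \<and> \<not> invertible_on (K j) A)"
proof -
  let ?D = "Dsp A"
  define U0 where "U0 = (\<Union>n\<in>{n. \<pi> n \<noteq> 0}. ?D n)"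
  define K where "K j = (if j = 0 then orth U0 else closure (cspan (\<Union>n\<in>{n. \<pi> n = j}. ?D n)))" for j
  have K0: "K 0 = orth U0" by (simp add: K_def)
  have Kj: "j \<noteq> 0 \<Longrightarrow> K j = closure (cspan (\<Union>n\<in>{n. \<pi> n = j}. ?D n))" for j by (simp add: K_def)
  have Kcsub: "closed_csubspace (K j)" for j
    by (cases "j = 0") (simp_all add: K0 Kj csub_orth csub_ccspan)
  have U0inv: "A x \<in> U0" if "x \<in> U0" for x
    using that Dsp_inv[OF A injA ninv] unfolding U0_def by blast
  have Kinv: "A x \<in> K j" if "x \<in> K j" for j x
  proof (cases "j = 0")
    case True
    then show ?thesis using that orth_invariant[OF A(2) U0inv] by (simp add: K0)
  next
    case False
    have h: "A y \<in> (\<Union>n\<in>{n. \<pi> n = j}. ?D n)" if "y \<in> (\<Union>n\<in>{n. \<pi> n = j}. ?D n)" for y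
      using that Dsp_inv[OF A injA ninv] by blast
    have "A x \<in> closure (cspan (\<Union>n\<in>{n. \<pi> n = j}. ?D n))"
      using ccspan_invariant[OF A(1) h] that[unfolded Kj[OF False]] by blast
    then show ?thesis unfolding Kj[OF False] .
  qed
  have DK: "?D n \<subseteq> K (\<pi> n)" for n
  proof (cases "\<pi> n = 0")
    case True
    have "?D n \<subseteq> orth U0"
    proof
      fix u assume u: "u \<in> ?D n"
      have "cinner w u = 0" if "w \<in> U0" for w
      proof -
        obtain n' where n': "\<pi> n' \<noteq> 0" "w \<in> ?D n'" using \<open>w \<in> U0\<close> unfolding U0_def by blast
        have "n' \<noteq> n" using n'(1) True by auto
        then show ?thesis by (rule Dsp_orth[OF A injA ninv _ n'(2) u])
      qed
      then show "u \<in> orth U0" by (simp add: orth_iff)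
    qed
    then show ?thesis using True by (simp add: K0)
  next
    case False
    have "?D n \<subseteq> (\<Union>n'\<in>{n'. \<pi> n' = \<pi> n}. ?D n')" by blast
    also have "\<dots> \<subseteq> closure (cspan (\<Union>n'\<in>{n'. \<pi> n' = \<pi> n}. ?D n'))" by (rule ccspan_base)
    finally show ?thesis using False by (simp add: Kj)
  qed
  have Korth_nz: "K j \<subseteq> orth (K l)" if j: "j \<noteq> 0" and jl: "j \<noteq> l" for j l
  proof -
    have "?D n \<subseteq> orth (K l)" if n: "\<pi> n = j" for n
    proof (cases "l = 0")
      case True
      have "?D n \<subseteq> U0" unfolding U0_def using n j by blast
      moreover have "U0 \<subseteq> orth (orth U0)" by (rule iffD2[OF orth_sym]) (rule subset_refl)
      ultimately have "?D n \<subseteq> orth (orth U0)" by (rule subset_trans)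
      then show ?thesis using True by (simp only: K0)
    next
      case False
      have "(\<Union>n'\<in>{n'. \<pi> n' = l}. ?D n') \<subseteq> orth (?D n)"
      proof
        fix v assume "v \<in> (\<Union>n'\<in>{n'. \<pi> n' = l}. ?D n')"
        then obtain n' where n': "\<pi> n' = l" "v \<in> ?D n'" by blast
        have "n \<noteq> n'" using n n' jl by auto
        have "cinner u v = 0" if "u \<in> ?D n" for u
          by (rule Dsp_orth[OF A injA ninv \<open>n \<noteq> n'\<close> that n'(2)])
        then show "v \<in> orth (?D n)" by (simp add: orth_iff)
      qed
      then have "K l \<subseteq> orth (?D n)" unfolding Kj[OF False] by (rule ccspan_sub[OF csub_orth])
      then show ?thesis by (rule iffD2[OF orth_sym])
    qed
    then have "(\<Union>n\<in>{n. \<pi> n = j}. ?D n) \<subseteq> orth (K l)" by blast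
    then show ?thesis unfolding Kj[OF j] by (rule ccspan_sub[OF csub_orth])
  qed
  have orthK: "cinner x y = 0" if "k \<noteq> l" "x \<in> K k" "y \<in> K l" for k l x y
  proof (cases "k = 0")
    case False
    then have "x \<in> orth (K l)" using Korth_nz[OF False that(1)] that(2) by blast
    then have "cinner y x = 0" using that(3) by (simp add: orth_iff)
    then show ?thesis using cinner_zero_sym by blast
  next
    case True
    then have "l \<noteq> 0" using that(1) by simp
    then have "y \<in> orth (K k)" using Korth_nz[of l k] that by blast
    then show ?thesis using that(2) by (simp add: orth_iff)
  qed
  have span: "closure (cspan (\<Union>k\<in>I. K k)) = UNIV"
  proof -
    define Z where "Z = closure (cspan (\<Union>k\<in>I. K k))"
    have Z: "closed_csubspace Z" unfolding Z_def by (rule csub_ccspan)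
    define W where "W = closure (cspan U0)"
    have W: "closed_csubspace W" unfolding W_def by (rule csub_ccspan)
    have U0K: "U0 \<subseteq> (\<Union>k\<in>I. K k)"
    proof
      fix u assume "u \<in> U0"
      then obtain n where "u \<in> ?D n" unfolding U0_def by blast
      then have "u \<in> K (\<pi> n)" using DK by blast
      then show "u \<in> (\<Union>k\<in>I. K k)" using \<pi>I[of n] by blast
    qed
    have WZ: "W \<subseteq> Z" unfolding W_def Z_def by (rule ccspan_mono[OF U0K])
    have K0Z: "K 0 \<subseteq> Z"
    proof -
      have "K 0 \<subseteq> (\<Union>k\<in>I. K k)" using I0 by blast
      also have "\<dots> \<subseteq> Z" unfolding Z_def by (rule ccspan_base)
      finally show ?thesis .
    qed
    have "x \<in> Z" for x
    proof -
      have p: "proj W x \<in> Z" using WZ proj_props(1)[OF W] by blast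
      have "x - proj W x \<in> orth W" by (rule proj_props(2)[OF W])
      moreover have "orth W \<subseteq> orth U0" unfolding W_def by (rule orth_antimono[OF ccspan_base])
      ultimately have "x - proj W x \<in> K 0" using K0 by blast
      then have "x - proj W x \<in> Z" using K0Z by blast
      then have "proj W x + (x - proj W x) \<in> Z" by (rule csub_add[OF Z p])
      then show ?thesis by simp
    qed
    then show ?thesis unfolding Z_def by blast
  qed
  have ninvK: "\<not> invertible_on (K j) A" if jI: "j \<in> I" for j
  proof (rule noninv)
    show "A x \<in> K j" if "x \<in> K j" for x by (rule Kinv[OF that])
    fix \<delta> :: real assume d: "\<delta> > 0"
    obtain N where N: "(1/2::real)^N < \<delta>" using real_arch_pow_inv[OF d, of "1/2"] by auto
    obtain n where n: "n \<ge> N" "\<pi> n = j" using inf[OF jI] by blast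
    obtain y where y: "y \<in> ?D n" "y \<noteq> 0" using Dsp_nonzero[OF A injA ninv] by blast
    have "(norm (A y))^2 \<le> epsq A n * (norm y)^2" by (rule Dsp_small[OF A injA ninv y(1)])
    also have "\<dots> \<le> \<delta> * (norm y)^2"
    proof (rule mult_right_mono)
      have "epsq A n \<le> (1/2)^n" by (rule epsq_le_pow[OF A injA ninv])
      also have "\<dots> \<le> (1/2)^N" by (rule power_decreasing[OF n(1)]) simp_all
      finally show "epsq A n \<le> \<delta>" using N by simp
    qed simp
    finally have "(norm (A y))^2 \<le> \<delta> * (norm y)^2" .
    moreover have "y \<in> K j" using DK[of n] y(1) n(2) by blast
    ultimately show "\<exists>x\<in>K j. x \<noteq> 0 \<and> (norm (A x))^2 \<le> \<delta> * (norm x)^2" using y(2) by blast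
  qed
  have "orthogonal_sum K I" unfolding orthogonal_sum_def using orthK span by blast
  moreover have "\<forall>j\<in>I. closed_csubspace (K j) \<and> A ` K j \<subseteq> K j
          \<and> self_adjoint_on (K j) A \<and> inj_on A (K j) \<and> \<not> invertible_on (K j) A"
  proof (intro ballI conjI)
    fix j assume "j \<in> I"
    show "closed_csubspace (K j)" by (rule Kcsub)
    show "A ` K j \<subseteq> K j" using Kinv by blast
    show "self_adjoint_on (K j) A" using A(2) by (simp add: self_adjoint_on_def sa_def)
    show "inj_on A (K j)" using injA by (rule inj_on_subset) simp
    show "\<not> invertible_on (K j) A" by (rule ninvK[OF \<open>j \<in> I\<close>])
  qed
  ultimately show ?thesis by blast
qed

end

lemma index_map:
  assumes "0 < M"
  shows "\<exists>\<pi> :: nat \<Rightarrow> nat. (\<forall>n. \<pi> n \<in> idx M) \<and> (\<forall>j N. j \<in> idx M \<longrightarrow> (\<exists>n\<ge>N. \<pi> n = j))"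
proof (cases M)
  case (enat m)
  then have m: "m > 0" using assms by (simp add: zero_enat_def)
  have "\<forall>n. n mod m \<in> idx M" using m by (simp add: idx_def enat)
  moreover have "\<exists>n\<ge>N. n mod m = j" if "j \<in> idx M" for j N
  proof -
    have j: "j < m" using that by (simp add: idx_def enat)
    have "N \<le> j + m * N" using m by (simp add: trans_le_add2)
    moreover have "(j + m * N) mod m = j" using j by simp
    ultimately show ?thesis by blast
  qed
  ultimately show ?thesis by (intro exI[of _ "\<lambda>n. n mod m"]) blast
next
  case infinity
  have "\<forall>n. fst (prod_decode n) \<in> idx M" by (simp add: idx_def infinity)
  moreover have "\<exists>n\<ge>N. fst (prod_decode n) = j" for j N
  proof -
    have "N \<le> prod_encode (j, N)" by (rule le_prod_encode_2)
    moreover have "fst (prod_decode (prod_encode (j, N))) = j" by simp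
    ultimately show ?thesis by blast
  qed
  ultimately show ?thesis by (intro exI[of _ "\<lambda>n. fst (prod_decode n)"]) blast
qed

theorem mainTheorem5:
  fixes A :: "'a::complex_hilbert \<Rightarrow> 'a" and N M :: enat
  assumes "separable_space TYPE('a)"
    and "bounded_clinear_on UNIV A"
    and "self_adjoint_on UNIV A"
    and "inj A"
    and "\<not> invertible_on UNIV A"
    and "cyclic_multiplicity A N"
    and "N \<le> M"
  shows "\<exists>K :: nat \<Rightarrow> 'a set.
           orthogonal_sum K (idx M)
         \<and> (\<forall>j\<in>idx M. closed_csubspace (K j) \<and> A ` K j \<subseteq> K j
               \<and> self_adjoint_on (K j) A \<and> inj_on A (K j) \<and> \<not> invertible_on (K j) A)"
proof -
  have BA: "blin A" using assms(2) by (simp add: blin_iff)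
  have SA: "sa A" using assms(3) by (simp add: self_adjoint_on_def sa_def)
  have N0: "N \<noteq> 0"
  proof
    assume N: "N = 0"
    from assms(6) obtain h where "cyclic_decomposition A N h" unfolding cyclic_multiplicity_def by blast
    then have "closure (cspan (\<Union>k\<in>idx N. cyclic_subspace A (h k))) = UNIV"
      unfolding cyclic_decomposition_def orthogonal_sum_def by blast
    moreover have "idx N = {}" using N by (simp add: idx_def zero_enat_def)
    ultimately have U: "closure (cspan {}) = (UNIV :: 'a set)" by simp
    have "closure (cspan {}) \<subseteq> {0::'a}" by (rule ccspan_sub[OF csub_zero_space]) simp
    then have all0: "\<And>x::'a. x = 0" using U by blast
    have Ay: "A y = y" for y using all0[of "A y"] all0[of y] by simp
    have bid: "bounded_clinear_on UNIV (\<lambda>x::'a. x)" using blin_id by (simp add: blin_iff)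
    have "invertible_on UNIV A"
      unfolding invertible_on_def using bid Ay by auto
    then show False using assms(5) by blast
  qed
  have "M \<noteq> 0" using N0 assms(7) by (auto simp: ile0_eq)
  then have M0: "0 < M" by (simp add: gr_zeroI)
  have I0: "0 \<in> idx M" using M0 by (simp add: idx_def zero_enat_def)
  obtain \<pi> :: "nat \<Rightarrow> nat" where \<pi>: "\<And>n. \<pi> n \<in> idx M" "\<And>j N. j \<in> idx M \<Longrightarrow> \<exists>n\<ge>N. \<pi> n = j"
    using index_map[OF M0] by blast
  show ?thesis by (rule assemble[OF BA SA assms(4) assms(5) I0 \<pi>(1) \<pi>(2)])
qed


end
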